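(* Let $H$ be a forest and $S\subseteq V(H)$ such that every leaf of $H$ lies in $S$ and every connected component of $H$ has at least two vertices. Then there is a set $F^*\subseteq V(H)$ with $|F^*\cap S|\ge \frac12|S|$ such that every connected component of $H[F^*]$ is a quasi-$S$-clean subdivided star.
   Context: All graphs are finite and simple. A subdivided star is a graph with at least two vertices obtained from a star $K_{1,m}$ ($m\ge1$) by replacing its edges with paths of arbitrary positive length; in particular every path with at least two vertices is a subdivided star. If a subdivided star has a vertex of degree at least 3, that vertex is its center. A subdivided star $T$ is quasi-$S$-clean if every leaf of $T$ lies in $S$ and $V(T)\cap S$ consists of the leaves of $T$ plus possibly one further vertex, which in case $T$ has a vertex of degree at least 3 must be that center vertex (when $T$ is a path, the further vertex may be any single internal vertex). *)

theory Defs
  imports Main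
begin

definition graph :: "'a set \<Rightarrow> 'a set set \<Rightarrow> bool" where
  "graph V E \<longleftrightarrow> finite V \<and> (\<forall>e\<in>E. e \<subseteq> V \<and> card e = 2)"

definition degree :: "'a set set \<Rightarrow> 'a \<Rightarrow> nat" where
  "degree E v = card {u. {v, u} \<in> E}"

definition leaves :: "'a set \<Rightarrow> 'a set set \<Rightarrow> 'a set" where
  "leaves V E = {v \<in> V. degree E v = 1}"

definition induced :: "'a set set \<Rightarrow> 'a set \<Rightarrow> 'a set set" where
  "induced E X = {e \<in> E. e \<subseteq> X}"

definition reach :: "'a set set \<Rightarrow> 'a \<Rightarrow> 'a \<Rightarrow> bool" where
  "reach E = (\<lambda>x y. {x, y} \<in> E)\<^sup>*\<^sup>*"

definition connected_graph :: "'a set \<Rightarrow> 'a set set \<Rightarrow> bool" where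
  "connected_graph V E \<longleftrightarrow> V \<noteq> {} \<and> (\<forall>u\<in>V. \<forall>v\<in>V. reach E u v)"

definition components :: "'a set \<Rightarrow> 'a set set \<Rightarrow> 'a set set" where
  "components V E = {{u \<in> V. reach E v u} | v. v \<in> V}"

definition is_cycle :: "'a set set \<Rightarrow> 'a list \<Rightarrow> bool" where
  "is_cycle E xs \<longleftrightarrow> length xs \<ge> 3 \<and> distinct xs \<and>
     (\<forall>i. Suc i < length xs \<longrightarrow> {xs ! i, xs ! Suc i} \<in> E) \<and> {last xs, hd xs} \<in> E"

definition forest :: "'a set \<Rightarrow> 'a set set \<Rightarrow> bool" where
  "forest V E \<longleftrightarrow> graph V E \<and> \<not> (\<exists>xs. set xs \<subseteq> V \<and> is_cycle E xs)"

definition tree :: "'a set \<Rightarrow> 'a set set \<Rightarrow> bool" where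
  "tree V E \<longleftrightarrow> forest V E \<and> connected_graph V E"

text \<open>Subdivided star (obtained from K_{1,m}, m \<ge> 1, by subdividing edges):
  equivalently a tree with at least two vertices having at most one vertex of degree \<ge> 3.\<close>
definition subdivided_star :: "'a set \<Rightarrow> 'a set set \<Rightarrow> bool" where
  "subdivided_star V E \<longleftrightarrow> tree V E \<and> card V \<ge> 2 \<and>
     (\<forall>u\<in>V. \<forall>v\<in>V. degree E u \<ge> 3 \<and> degree E v \<ge> 3 \<longrightarrow> u = v)"

definition quasi_clean :: "'a set \<Rightarrow> 'a set \<Rightarrow> 'a set set \<Rightarrow> bool" where
  "quasi_clean S V E \<longleftrightarrow> subdivided_star V E \<and> leaves V E \<subseteq> S \<and>
     (\<exists>X. X \<subseteq> V \<and> card X \<le> 1 \<and> V \<inter> S = leaves V E \<union> X \<and>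
          (\<forall>x\<in>X. \<forall>v\<in>V. degree E v \<ge> 3 \<longrightarrow> x = v))"

end

theory Submission
  imports Defs
begin



lemma reach_mono: "E \<subseteq> E' \<Longrightarrow> reach E x y \<Longrightarrow> reach E' x y"
  unfolding reach_def by (erule rtranclp_mono[THEN predicate2D, rotated]) auto

lemma reach_refl[simp]: "reach E x x"
  unfolding reach_def by simp

lemma reach_trans: "reach E x y \<Longrightarrow> reach E y z \<Longrightarrow> reach E x z"
  unfolding reach_def by (rule rtranclp_trans)

lemma reach_step: "reach E x y \<Longrightarrow> {y, z} \<in> E \<Longrightarrow> reach E x z"
  unfolding reach_def by (rule rtranclp.rtrancl_into_rtrancl)

lemma reach_edge: "{x, y} \<in> E \<Longrightarrow> reach E x y"
  using reach_step[of E x x y] by simp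

lemma reach_induct[consumes 1, case_names base step]:
  assumes "reach E a b" "P a"
    "\<And>y z. reach E a y \<Longrightarrow> {y, z} \<in> E \<Longrightarrow> P y \<Longrightarrow> P z"
  shows "P b"
  using assms(1) unfolding reach_def
proof (induction rule: rtranclp_induct)
  case base then show ?case using assms(2) by simp
next
  case (step y z) then show ?case using assms(3) unfolding reach_def by blast
qed

lemma reach_sym: "reach E x y \<Longrightarrow> reach E y x"
  unfolding reach_def
proof (induction rule: rtranclp_induct)
  case base then show ?case by simp
next
  case (step y z)
  have "{z, y} \<in> E" using step(2) by (simp add: insert_commute)
  then show ?case using step(3) by (rule converse_rtranclp_into_rtranclp)
qed

lemma reach_induced_in: "reach (induced E W) x y \<Longrightarrow> x = y \<or> y \<in> W"
  unfolding reach_def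
  by (induction rule: rtranclp_induct) (auto simp: induced_def)

lemma reach_restrict:
  assumes "reach (induced E W) a b"
  shows "reach (induced E {x\<in>W. reach (induced E W) a x}) a b"
  using assms unfolding reach_def
proof (induction rule: rtranclp_induct)
  case base then show ?case by simp
next
  case (step y z)
  have yz: "{y, z} \<in> E" "y \<in> W" "z \<in> W" using step(2) by (auto simp: induced_def)
  have "reach (induced E W) a y" using step(1) unfolding reach_def .
  moreover have "reach (induced E W) a z" using step(1,2) unfolding reach_def
    by (simp add: rtranclp.rtrancl_into_rtrancl)
  ultimately have "{y, z} \<in> induced E {x\<in>W. reach (induced E W) a x}"
    using yz by (auto simp: induced_def)
  then show ?case using step(3) unfolding reach_def by (simp add: rtranclp.rtrancl_into_rtrancl)
qed

fun walk :: "'a set set \<Rightarrow> 'a list \<Rightarrow> bool" where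
  "walk E [] = True"
| "walk E [x] = True"
| "walk E (x # y # xs) = ({x, y} \<in> E \<and> walk E (y # xs))"

lemma walk_nth: "walk E xs \<longleftrightarrow> (\<forall>i. Suc i < length xs \<longrightarrow> {xs ! i, xs ! Suc i} \<in> E)"
proof (induction E xs rule: walk.induct)
  case (3 E x y xs)
  show ?case
  proof
    assume "walk E (x # y # xs)"
    then show "\<forall>i. Suc i < length (x # y # xs) \<longrightarrow> {(x # y # xs) ! i, (x # y # xs) ! Suc i} \<in> E"
      using 3 by (auto simp: nth_Cons split: nat.splits)
  next
    assume H: "\<forall>i. Suc i < length (x # y # xs) \<longrightarrow> {(x # y # xs) ! i, (x # y # xs) ! Suc i} \<in> E"
    have "{x, y} \<in> E" using H[rule_format, of 0] by simp
    moreover have "\<forall>i. Suc i < length (y # xs) \<longrightarrow> {(y # xs) ! i, (y # xs) ! Suc i} \<in> E"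
      using H by (metis Suc_less_eq length_Cons nth_Cons_Suc)
    ultimately show "walk E (x # y # xs)" using 3 by simp
  qed
qed auto

lemma walk_append: "walk E (xs @ y # ys) \<longleftrightarrow> walk E (xs @ [y]) \<and> walk E (y # ys)"
proof (induction xs rule: walk.induct)
  case (2 E x)
  then show ?case by simp
next
  case (3 E x z xs)
  then show ?case by simp
qed simp

lemma walk_snoc: "walk E (xs @ [y]) \<Longrightarrow> {y, z} \<in> E \<Longrightarrow> walk E (xs @ [y, z])"
  using walk_append[of E xs y "[z]"] by simp

lemma walk_mono: "walk E xs \<Longrightarrow> E \<subseteq> E' \<Longrightarrow> walk E' xs"
  by (induction E xs rule: walk.induct) auto

lemma reach_walk:
  assumes "reach E a b"
  shows "\<exists>xs. xs \<noteq> [] \<and> hd xs = a \<and> last xs = b \<and> walk E xs"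
  using assms unfolding reach_def
proof (induction rule: rtranclp_induct)
  case base then show ?case by (intro exI[of _ "[a]"]) simp
next
  case (step y z)
  then obtain xs where xs: "xs \<noteq> []" "hd xs = a" "last xs = y" "walk E xs" by blast
  then obtain ys where "xs = ys @ [y]" by (metis append_butlast_last_id)
  with xs step(2) show ?case
    by (intro exI[of _ "ys @ [y, z]"]) (auto simp: walk_snoc hd_append split: if_splits)
qed

lemma walk_distinct:
  assumes "walk E xs" "xs \<noteq> []"
  shows "\<exists>ys. ys \<noteq> [] \<and> hd ys = hd xs \<and> last ys = last xs \<and> walk E ys \<and> distinct ys \<and> set ys \<subseteq> set xs"
  using assms
proof (induction "length xs" arbitrary: xs rule: less_induct)
  case less
  show ?case
  proof (cases "distinct xs")
    case True then show ?thesis using less.prems by blast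
  next
    case False
    then obtain as y bs cs where xs: "xs = as @ [y] @ bs @ [y] @ cs"
      using not_distinct_decomp by blast
    let ?zs = "as @ [y] @ cs"
    have w0: "walk E (as @ y # (bs @ y # cs))" using less.prems(1) xs by simp
    have w1: "walk E (as @ [y])" using w0 walk_append[of E as y "bs @ y # cs"] by blast
    have w2: "walk E ((y # bs) @ y # cs)" using w0 walk_append[of E as y "bs @ y # cs"] by simp
    have "walk E (y # cs)" using w2 walk_append[of E "y # bs" y cs] by blast
    then have wz: "walk E ?zs" using w1 walk_append[of E as y cs] by simp
    have "length ?zs < length xs" using xs by simp
    from less.hyps[OF this wz] obtain ys where ys: "ys \<noteq> []" "hd ys = hd ?zs" "last ys = last ?zs" "walk E ys"
      "distinct ys" "set ys \<subseteq> set ?zs"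
      by auto
    have h1: "hd ?zs = hd xs" using xs by (cases as) auto
    have h2: "last ?zs = last xs" using xs by (cases cs) auto
    have h3: "set ?zs \<subseteq> set xs" using xs by auto
    have "hd ys = hd xs" using ys(2) h1 by (rule trans)
    moreover have "last ys = last xs" using ys(3) h2 by (rule trans)
    moreover have "set ys \<subseteq> set xs" using ys(6) h3 by (rule subset_trans)
    ultimately show ?thesis using ys(1,4,5) by blast
  qed
qed

lemma walk_induced_set:
  assumes "walk (induced E W) xs" "length xs \<ge> 2"
  shows "set xs \<subseteq> W"
proof
  fix x assume "x \<in> set xs"
  then obtain i where i: "i < length xs" "xs ! i = x" by (auto simp: in_set_conv_nth)
  have W: "\<And>j. Suc j < length xs \<Longrightarrow> {xs ! j, xs ! Suc j} \<in> induced E W"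
    using assms(1) walk_nth by metis
  show "x \<in> W"
  proof (cases "Suc i < length xs")
    case True then show ?thesis using W[OF True] i by (auto simp: induced_def)
  next
    case False
    then obtain j where j: "i = Suc j" using assms(2) i by (cases i) auto
    then show ?thesis using W[of j] i by (auto simp: induced_def)
  qed
qed




lemma induced_mono: "A \<subseteq> B \<Longrightarrow> induced E A \<subseteq> induced E B"
  by (auto simp: induced_def)

lemma induced_sub: "induced E A \<subseteq> E"
  by (auto simp: induced_def)

locale FS =
  fixes V :: "'a set" and E :: "'a set set" and S :: "'a set"
  assumes forest: "forest V E"
begin

lemma finV: "finite V"
  using forest by (simp add: forest_def graph_def)

lemma edgeE: "e \<in> E \<Longrightarrow> e \<subseteq> V \<and> card e = 2"
  using forest by (simp add: forest_def graph_def)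

lemma edge_neq: "{x, y} \<in> E \<Longrightarrow> x \<noteq> y"
  using edgeE[of "{x,y}"] by auto

lemma edge_in: "{x, y} \<in> E \<Longrightarrow> x \<in> V \<and> y \<in> V"
  using edgeE[of "{x,y}"] by auto

lemma no_cycle: "set xs \<subseteq> V \<Longrightarrow> \<not> is_cycle E xs"
  using forest by (auto simp: forest_def)

lemma cycle_lemma:
  assumes "{v, c} \<in> E" "{v, c'} \<in> E" "c \<noteq> c'" "reach (induced E W) c c'" "v \<notin> W" "W \<subseteq> V"
  shows False
proof -
  obtain xs where xs: "xs \<noteq> []" "hd xs = c" "last xs = c'" "walk (induced E W) xs"
    using reach_walk[OF assms(4)] by blast
  obtain ys where ys: "ys \<noteq> []" "hd ys = c" "last ys = c'" "walk (induced E W) ys" "distinct ys"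
    using walk_distinct[OF xs(4,1)] xs by auto
  have len: "length ys \<ge> 2"
  proof (rule ccontr)
    assume "\<not> length ys \<ge> 2"
    moreover have "length ys \<noteq> 0" using ys(1) by simp
    ultimately have "length ys = 1" by linarith
    then obtain a where "ys = [a]" by (cases ys) auto
    then show False using ys assms(3) by simp
  qed
  have setW: "set ys \<subseteq> W" using walk_induced_set[OF ys(4) len] .
  obtain r where ysr: "ys = c # r" using ys(1,2) by (cases ys) auto
  have wE: "walk E ys" using walk_mono[OF ys(4) induced_sub] .
  have wz: "walk E (v # ys)" using wE assms(1) ysr by simp
  have "is_cycle E (v # ys)"
    unfolding is_cycle_def
  proof (intro conjI)
    show "3 \<le> length (v # ys)" using len by simp
    show "distinct (v # ys)" using ys(5) setW assms(5) by auto
    show "\<forall>i. Suc i < length (v # ys) \<longrightarrow> {(v # ys) ! i, (v # ys) ! Suc i} \<in> E"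
      using wz walk_nth by metis
    show "{last (v # ys), hd (v # ys)} \<in> E" using ys(1,3) assms(2) by (simp add: insert_commute)
  qed
  moreover have "set (v # ys) \<subseteq> V" using setW assms(6) assms(1) edge_in by auto
  ultimately show False using no_cycle by blast
qed

definition rsub :: "'a set \<Rightarrow> 'a \<Rightarrow> bool" where
  "rsub T v \<longleftrightarrow> T \<subseteq> V \<and> v \<in> T \<and> (\<forall>x\<in>T. reach (induced E T) v x) \<and>
     (\<forall>x\<in>T. \<forall>y. {x, y} \<in> E \<longrightarrow> y \<notin> T \<longrightarrow> x = v)"

definition ch :: "'a set \<Rightarrow> 'a \<Rightarrow> 'a set" where
  "ch T v = {c \<in> T. {v, c} \<in> E}"

definition br :: "'a set \<Rightarrow> 'a \<Rightarrow> 'a \<Rightarrow> 'a set" where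
  "br T v c = {x \<in> T - {v}. reach (induced E (T - {v})) c x}"

lemma br_sub: "br T v c \<subseteq> T - {v}"
  by (auto simp: br_def)

lemma ch_sub: "ch T v \<subseteq> T"
  by (auto simp: ch_def)

lemma rsub_fin: "rsub T v \<Longrightarrow> finite T"
  using finV by (auto simp: rsub_def intro: finite_subset)

lemma ch_fin: "rsub T v \<Longrightarrow> finite (ch T v)"
  using rsub_fin ch_sub finite_subset by metis

lemma ch_in_br: "c \<in> ch T v \<Longrightarrow> c \<in> br T v c"
  using edge_neq by (auto simp: ch_def br_def)

lemma ch_neq: "c \<in> ch T v \<Longrightarrow> c \<noteq> v"
  using edge_neq by (auto simp: ch_def)

lemma ch_not_reach:
  assumes "rsub T v" "c \<in> ch T v" "c' \<in> ch T v" "c \<noteq> c'"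
  shows "\<not> reach (induced E (T - {v})) c c'"
proof
  assume "reach (induced E (T - {v})) c c'"
  moreover have "T - {v} \<subseteq> V" using assms(1) by (auto simp: rsub_def)
  ultimately show False using cycle_lemma[of v c c' "T - {v}"] assms(2-4) by (auto simp: ch_def)
qed

lemma br_eq:
  assumes "rsub T v" "c \<in> ch T v" "c' \<in> ch T v" "x \<in> br T v c" "x \<in> br T v c'"
  shows "c = c'"
proof (rule ccontr)
  assume ne: "c \<noteq> c'"
  have "reach (induced E (T - {v})) c x" "reach (induced E (T - {v})) c' x"
    using assms(4,5) by (auto simp: br_def)
  then have "reach (induced E (T - {v})) c c'" using reach_sym reach_trans by metis
  then show False using ch_not_reach assms ne by blast
qed

lemma br_disj:
  assumes "rsub T v" "c \<in> ch T v" "c' \<in> ch T v" "c \<noteq> c'"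
  shows "br T v c \<inter> br T v c' = {}"
  using br_eq assms by blast

lemma br_noedge:
  assumes "rsub T v" "c \<in> ch T v" "c' \<in> ch T v" "c \<noteq> c'" "x \<in> br T v c" "y \<in> br T v c'"
  shows "{x, y} \<notin> E"
proof
  assume e: "{x, y} \<in> E"
  have "x \<in> T - {v}" "y \<in> T - {v}" using assms(5,6) br_sub by auto
  then have "{x, y} \<in> induced E (T - {v})" using e by (auto simp: induced_def)
  moreover have "reach (induced E (T - {v})) c x" using assms(5) by (auto simp: br_def)
  ultimately have "reach (induced E (T - {v})) c y" using reach_step by metis
  then have "y \<in> br T v c" using \<open>y \<in> T - {v}\<close> by (auto simp: br_def)
  then show False using br_eq assms by blast
qed

lemma br_v_adj:
  assumes "rsub T v" "c \<in> ch T v" "x \<in> br T v c" "{v, x} \<in> E"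
  shows "x = c"
proof -
  have "x \<in> ch T v" using assms(3,4) br_sub by (auto simp: ch_def)
  then show ?thesis using br_eq[OF assms(1,2) _ assms(3)] ch_in_br by blast
qed

lemma v_notin_br: "v \<notin> br T v c"
  by (auto simp: br_def)

lemma rsub_br:
  assumes "rsub T v" "c \<in> ch T v"
  shows "rsub (br T v c) c"
  unfolding rsub_def
proof (intro conjI ballI allI impI)
  show "br T v c \<subseteq> V" using assms(1) br_sub[of T v c] by (auto simp: rsub_def)
  show "c \<in> br T v c" using ch_in_br[OF assms(2)] .
next
  fix x assume "x \<in> br T v c"
  then have "reach (induced E (T - {v})) c x" by (auto simp: br_def)
  then show "reach (induced E (br T v c)) c x"
    using reach_restrict unfolding br_def by metis
next
  fix x y assume x: "x \<in> br T v c" and e: "{x, y} \<in> E" and y: "y \<notin> br T v c"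
  have xT: "x \<in> T" "x \<noteq> v" using x br_sub by auto
  show "x = c"
  proof (cases "y \<in> T")
    case False
    then show ?thesis using assms(1) xT e by (auto simp: rsub_def)
  next
    case True
    show ?thesis
    proof (cases "y = v")
      case True
      then show ?thesis using br_v_adj[OF assms x] e by (simp add: insert_commute)
    next
      case False
      then have "{x, y} \<in> induced E (T - {v})" using e xT \<open>y \<in> T\<close> by (auto simp: induced_def)
      moreover have "reach (induced E (T - {v})) c x" using x by (auto simp: br_def)
      ultimately have "reach (induced E (T - {v})) c y" using reach_step by metis
      then have "y \<in> br T v c" using \<open>y \<in> T\<close> False by (auto simp: br_def)
      then show ?thesis using y by simp
    qed
  qed
qed

lemma br_cover:
  assumes "rsub T v" "x \<in> T" "x \<noteq> v"
  shows "\<exists>c\<in>ch T v. x \<in> br T v c"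
proof -
  have "reach (induced E T) v x" using assms by (auto simp: rsub_def)
  then have "x = v \<or> (\<exists>c\<in>ch T v. reach (induced E (T - {v})) c x)"
  proof (induction rule: reach_induct)
    case base then show ?case by simp
  next
    case (step y z)
    have e: "{y, z} \<in> E" "y \<in> T" "z \<in> T" using step(2) by (auto simp: induced_def)
    show ?case
    proof (cases "z = v")
      case True then show ?thesis by simp
    next
      case zv: False
      show ?thesis
      proof (cases "y = v")
        case True
        then have "z \<in> ch T v" using e by (auto simp: ch_def)
        moreover have "reach (induced E (T - {v})) z z" by simp
        ultimately show ?thesis by blast
      next
        case False
        then obtain c where c: "c \<in> ch T v" "reach (induced E (T - {v})) c y" using step(3) by auto
        have "{y, z} \<in> induced E (T - {v})" using e False zv by (auto simp: induced_def)
        then have "reach (induced E (T - {v})) c z" using c(2) reach_step by metis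
        then show ?thesis using c(1) by blast
      qed
    qed
  qed
  then show ?thesis using assms(2,3) by (auto simp: br_def)
qed

lemma T_decomp:
  assumes "rsub T v"
  shows "T = insert v (\<Union>c\<in>ch T v. br T v c)"
proof
  show "T \<subseteq> insert v (\<Union>c\<in>ch T v. br T v c)" using br_cover[OF assms] by blast
  show "insert v (\<Union>c\<in>ch T v. br T v c) \<subseteq> T" using assms br_sub by (auto simp: rsub_def)
qed

lemma br_card_less:
  assumes "rsub T v" "c \<in> ch T v"
  shows "card (br T v c) < card T"
proof -
  have "br T v c \<subset> T" using br_sub[of T v c] assms(1) by (auto simp: rsub_def)
  then show ?thesis using rsub_fin[OF assms(1)] psubset_card_mono by blast
qed

lemma br_fin: "rsub T v \<Longrightarrow> finite (br T v c)"
  using rsub_fin br_sub[of T v c] finite_subset by blast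

lemma card_T_S:
  assumes "rsub T v"
  shows "card (T \<inter> S) = (if v \<in> S then 1 else 0) + (\<Sum>c\<in>ch T v. card (br T v c \<inter> S))"
proof -
  have fin: "finite T" using rsub_fin[OF assms] .
  have "T \<inter> S = ({v} \<inter> S) \<union> (\<Union>c\<in>ch T v. br T v c \<inter> S)"
    using T_decomp[OF assms] by blast
  moreover have "card (\<Union>c\<in>ch T v. br T v c \<inter> S) = (\<Sum>c\<in>ch T v. card (br T v c \<inter> S))"
  proof (rule card_UN_disjoint)
    show "finite (ch T v)" using ch_fin[OF assms] .
    show "\<forall>i\<in>ch T v. finite (br T v i \<inter> S)" using br_fin[OF assms] by blast
    show "\<forall>i\<in>ch T v. \<forall>j\<in>ch T v. i \<noteq> j \<longrightarrow> br T v i \<inter> S \<inter> (br T v j \<inter> S) = {}"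
      using br_disj[OF assms] by blast
  qed
  moreover have "({v} \<inter> S) \<inter> (\<Union>c\<in>ch T v. br T v c \<inter> S) = {}" using v_notin_br by blast
  moreover have "finite (\<Union>c\<in>ch T v. br T v c \<inter> S)"
    using br_fin[OF assms] ch_fin[OF assms] by blast
  ultimately show ?thesis by (simp add: card_Un_disjoint)
qed

end



context FS begin

definition sep :: "'a set \<Rightarrow> 'a set \<Rightarrow> bool" where
  "sep A B \<longleftrightarrow> A \<inter> B = {} \<and> (\<forall>x\<in>A. \<forall>y\<in>B. {x, y} \<notin> E)"

definition good :: "'a set \<Rightarrow> bool" where
  "good F \<longleftrightarrow> (\<exists>KK. \<Union>KK = F \<and> (\<forall>K\<in>KK. quasi_clean S K (induced E K)) \<and>
      (\<forall>K\<in>KK. \<forall>K'\<in>KK. K \<noteq> K' \<longrightarrow> sep K K'))"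

lemma sep_sym:
  assumes "sep A B" shows "sep B A"
  unfolding sep_def
proof (intro conjI ballI)
  show "B \<inter> A = {}" using assms unfolding sep_def by blast
next
  fix x y assume "x \<in> B" "y \<in> A"
  then have "{y, x} \<notin> E" using assms unfolding sep_def by blast
  moreover have "{y, x} = {x, y}" by (rule insert_commute)
  ultimately show "{x, y} \<notin> E" by simp
qed

lemma sep_mono: "sep A B \<Longrightarrow> A' \<subseteq> A \<Longrightarrow> B' \<subseteq> B \<Longrightarrow> sep A' B'"
  unfolding sep_def by blast

lemma sep_Un: "sep A B \<Longrightarrow> sep A C \<Longrightarrow> sep A (B \<union> C)"
  unfolding sep_def by blast

lemma sep_UN: "(\<And>i. i \<in> I \<Longrightarrow> sep A (g i)) \<Longrightarrow> sep A (\<Union>i\<in>I. g i)"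
  unfolding sep_def by blast

lemma sep_empty[simp]: "sep A {}"
  unfolding sep_def by blast

lemma good_empty[simp]: "good {}"
  unfolding good_def by (intro exI[of _ "{}"]) simp

lemma good_qc: "quasi_clean S K (induced E K) \<Longrightarrow> good K"
  unfolding good_def by (intro exI[of _ "{K}"]) simp

lemma good_Un:
  assumes "good A" "good B" "sep A B"
  shows "good (A \<union> B)"
proof -
  obtain KA where KA: "\<Union>KA = A" "\<forall>K\<in>KA. quasi_clean S K (induced E K)"
    "\<forall>K\<in>KA. \<forall>K'\<in>KA. K \<noteq> K' \<longrightarrow> sep K K'" using assms(1) unfolding good_def by blast
  obtain KB where KB: "\<Union>KB = B" "\<forall>K\<in>KB. quasi_clean S K (induced E K)"
    "\<forall>K\<in>KB. \<forall>K'\<in>KB. K \<noteq> K' \<longrightarrow> sep K K'" using assms(2) unfolding good_def by blast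
  have "\<forall>K\<in>KA \<union> KB. \<forall>K'\<in>KA \<union> KB. K \<noteq> K' \<longrightarrow> sep K K'"
  proof (intro ballI impI)
    fix K K' assume K: "K \<in> KA \<union> KB" and K': "K' \<in> KA \<union> KB" and ne: "K \<noteq> K'"
    show "sep K K'"
    proof (cases "K \<in> KA")
      case True
      show ?thesis
      proof (cases "K' \<in> KA")
        case True then show ?thesis using KA(3) \<open>K \<in> KA\<close> ne by blast
      next
        case False then have "K' \<in> KB" using K' by blast
        then show ?thesis using sep_mono[OF assms(3)] KA(1) KB(1) \<open>K \<in> KA\<close> by blast
      qed
    next
      case False then have "K \<in> KB" using K by blast
      show ?thesis
      proof (cases "K' \<in> KB")
        case True then show ?thesis using KB(3) \<open>K \<in> KB\<close> ne by blast
      next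
        case False then have "K' \<in> KA" using K' by blast
        then show ?thesis using sep_mono[OF sep_sym[OF assms(3)]] KA(1) KB(1) \<open>K \<in> KB\<close> by blast
      qed
    qed
  qed
  then show ?thesis unfolding good_def using KA KB
    by (intro exI[of _ "KA \<union> KB"]) auto
qed

lemma good_UN:
  assumes "finite I" "\<And>i. i \<in> I \<Longrightarrow> good (g i)"
    "\<And>i j. i \<in> I \<Longrightarrow> j \<in> I \<Longrightarrow> i \<noteq> j \<Longrightarrow> sep (g i) (g j)"
  shows "good (\<Union>i\<in>I. g i)"
  using assms
proof (induction I rule: finite_induct)
  case empty then show ?case by simp
next
  case (insert i I)
  have "good (\<Union>i\<in>I. g i)" using insert by blast
  moreover have "sep (g i) (\<Union>i\<in>I. g i)"
    using insert.prems(2) insert.hyps(2) by (intro sep_UN) (metis insertI1 insertI2)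
  ultimately show ?case using good_Un insert.prems(1) by simp
qed

lemma qc_conn:
  assumes "quasi_clean S K (induced E K)" "x \<in> K" "y \<in> K"
  shows "reach (induced E K) x y"
  using assms unfolding quasi_clean_def subdivided_star_def tree_def connected_graph_def by blast

lemma good_components:
  assumes "good F" "C \<in> components F (induced E F)"
  shows "quasi_clean S C (induced E C)"
proof -
  obtain KK where KK: "\<Union>KK = F" "\<forall>K\<in>KK. quasi_clean S K (induced E K)"
    "\<forall>K\<in>KK. \<forall>K'\<in>KK. K \<noteq> K' \<longrightarrow> sep K K'" using assms(1) unfolding good_def by blast
  obtain w where w: "w \<in> F" "C = {u \<in> F. reach (induced E F) w u}"
    using assms(2) unfolding components_def by blast
  obtain K where K: "K \<in> KK" "w \<in> K" using KK(1) w(1) by blast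
  have "C = K"
  proof
    show "K \<subseteq> C"
    proof
      fix u assume u: "u \<in> K"
      have qK: "quasi_clean S K (induced E K)" using KK(2) K(1) by blast
      have r: "reach (induced E K) w u" using qc_conn[OF qK K(2) u] .
      have KF: "K \<subseteq> F" using K(1) KK(1) by blast
      have "induced E K \<subseteq> induced E F" using induced_mono[OF KF] .
      from reach_mono[OF this r] have "reach (induced E F) w u" .
      moreover have "u \<in> F" using KF u by blast
      ultimately show "u \<in> C" using w(2) by blast
    qed
  next
    show "C \<subseteq> K"
    proof
      fix u assume "u \<in> C"
      then have "reach (induced E F) w u" using w(2) by blast
      then show "u \<in> K"
      proof (induction rule: reach_induct)
        case base then show ?case using K(2) .
      next
        case (step y z)
        have e: "{y, z} \<in> E" "z \<in> F" using step(2) by (auto simp: induced_def)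
        then obtain K' where K': "K' \<in> KK" "z \<in> K'" using KK(1) by blast
        show ?case
        proof (rule ccontr)
          assume "z \<notin> K"
          then have "K \<noteq> K'" using K' by blast
          then have "sep K K'" using KK(3) K(1) K'(1) by blast
          then show False using step(3) K'(2) e(1) unfolding sep_def by blast
        qed
      qed
    qed
  qed
  then show ?thesis using KK(2) K(1) by simp
qed

definition conn :: "'a set \<Rightarrow> bool" where
  "conn K \<longleftrightarrow> (\<forall>x\<in>K. \<forall>y\<in>K. reach (induced E K) x y)"

lemma nbr_eq: "x \<in> K \<Longrightarrow> {w. {x, w} \<in> induced E K} = {w \<in> K. {x, w} \<in> E}"
  by (auto simp: induced_def)

lemma deg_eq: "x \<in> K \<Longrightarrow> degree (induced E K) x = card {w \<in> K. {x, w} \<in> E}"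
  unfolding degree_def using nbr_eq by simp

lemma conn_deg_pos:
  assumes "finite K" "conn K" "x \<in> K" "y \<in> K" "x \<noteq> y"
  shows "degree (induced E K) x \<ge> 1"
proof -
  have "reach (induced E K) y x" using assms(2-4) unfolding conn_def by blast
  then have "x = y \<or> (\<exists>w. {w, x} \<in> induced E K)"
    by (induction rule: reach_induct) auto
  then obtain w where "{w, x} \<in> induced E K" using assms(5) by blast
  then have "w \<in> {w \<in> K. {x, w} \<in> E}" by (auto simp: induced_def insert_commute)
  moreover have "finite {w \<in> K. {x, w} \<in> E}" using assms(1) by simp
  ultimately have "card {w \<in> K. {x, w} \<in> E} \<ge> 1"
    by (metis One_nat_def Suc_leI card_gt_0_iff empty_iff)
  then show ?thesis using deg_eq[OF assms(3)] by simp
qed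

lemma sub_forest:
  assumes "K \<subseteq> V" "finite K"
  shows "forest K (induced E K)"
proof -
  have g: "graph K (induced E K)"
    unfolding graph_def using assms(2) edgeE by (auto simp: induced_def)
  have nc: "\<not> (\<exists>xs. set xs \<subseteq> K \<and> is_cycle (induced E K) xs)"
  proof
    assume "\<exists>xs. set xs \<subseteq> K \<and> is_cycle (induced E K) xs"
    then obtain xs where xs: "set xs \<subseteq> K" "is_cycle (induced E K) xs" by blast
    have "is_cycle E xs" using xs(2) induced_sub unfolding is_cycle_def by blast
    then show False using no_cycle xs(1) assms(1) by blast
  qed
  show ?thesis unfolding forest_def using g nc by blast
qed

lemma sub_tree:
  assumes "K \<subseteq> V" "finite K" "conn K" "K \<noteq> {}"
  shows "tree K (induced E K)"
  using sub_forest[OF assms(1,2)] assms(3,4) unfolding tree_def connected_graph_def conn_def by blast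

definition pathpend :: "'a \<Rightarrow> 'a set \<Rightarrow> bool" where
  "pathpend v K \<longleftrightarrow> v \<in> K \<and> finite K \<and> conn K \<and> (\<forall>u\<in>K. degree (induced E K) u \<le> 2) \<and>
     degree (induced E K) v \<le> 1 \<and>
     (\<exists>s. K \<inter> S = {s} \<and> (\<forall>u\<in>K. degree (induced E K) u \<le> 1 \<longrightarrow> u = v \<or> u = s) \<and>
        degree (induced E K) s \<le> 1 \<and> (s = v \<longrightarrow> K = {v}))"

definition pend :: "'a set \<Rightarrow> 'a \<Rightarrow> 'a set \<Rightarrow> bool" where
  "pend T v F \<longleftrightarrow> F \<subseteq> T \<and> (\<exists>K R. F = K \<union> R \<and> pathpend v K \<and> good R \<and> sep K R)"

lemma pathpend_single:
  assumes "pathpend c K" "degree (induced E K) c = 0"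
  shows "K = {c}"
proof (rule ccontr)
  assume "K \<noteq> {c}"
  moreover have "c \<in> K" using assms(1) by (simp add: pathpend_def)
  ultimately obtain y where "y \<in> K" "y \<noteq> c" by blast
  then have "degree (induced E K) c \<ge> 1" using assms(1) conn_deg_pos[of K c y]
    unfolding pathpend_def by metis
  then show False using assms(2) by simp
qed

lemma deg_single: "degree (induced E {c}) c = 0"
proof -
  have "{c} \<notin> E" using edgeE[of "{c}"] by auto
  then show ?thesis using deg_eq[of c "{c}"] by simp
qed

end



context FS begin

definition sfn :: "'a set \<Rightarrow> 'a" where
  "sfn K = the_elem (K \<inter> S)"

context
  fixes T v P Kf
  assumes rs: "rsub T v" and Psub: "P \<subseteq> ch T v"
    and Kf: "\<And>c. c \<in> P \<Longrightarrow> pathpend c (Kf c)"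
    and Kfb: "\<And>c. c \<in> P \<Longrightarrow> Kf c \<subseteq> br T v c"
begin

lemma st_Pfin: "finite P"
  using ch_fin[OF rs] Psub finite_subset by blast

lemma st_vnot: "c \<in> P \<Longrightarrow> v \<notin> Kf c"
  using Kfb v_notin_br by blast

lemma st_cin: "c \<in> P \<Longrightarrow> c \<in> Kf c"
  using Kf unfolding pathpend_def by blast

lemma st_Kfin: "c \<in> P \<Longrightarrow> finite (Kf c)"
  using Kf unfolding pathpend_def by blast

lemma st_nbr_v: "{w \<in> insert v (\<Union>c\<in>P. Kf c). {v, w} \<in> E} = P"
proof
  show "{w \<in> insert v (\<Union>c\<in>P. Kf c). {v, w} \<in> E} \<subseteq> P"
  proof
    fix w assume w: "w \<in> {w \<in> insert v (\<Union>c\<in>P. Kf c). {v, w} \<in> E}"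
    then have e: "{v, w} \<in> E" by blast
    then have "w \<noteq> v" using edge_neq by blast
    then obtain c where c: "c \<in> P" "w \<in> Kf c" using w by blast
    have "w \<in> br T v c" using Kfb[OF c(1)] c(2) by blast
    then have "w = c" using br_v_adj[OF rs _ _ e] Psub c(1) by blast
    then show "w \<in> P" using c(1) by simp
  qed
next
  show "P \<subseteq> {w \<in> insert v (\<Union>c\<in>P. Kf c). {v, w} \<in> E}"
  proof
    fix c assume c: "c \<in> P"
    then have "{v, c} \<in> E" using Psub by (auto simp: ch_def)
    then show "c \<in> {w \<in> insert v (\<Union>c\<in>P. Kf c). {v, w} \<in> E}" using st_cin[OF c] c by blast
  qed
qed

lemma st_deg_v: "degree (induced E (insert v (\<Union>c\<in>P. Kf c))) v = card P"
  using deg_eq[of v "insert v (\<Union>c\<in>P. Kf c)"] st_nbr_v by simp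

lemma st_nbr_u:
  assumes c: "c \<in> P" and u: "u \<in> Kf c"
  shows "{w \<in> insert v (\<Union>c\<in>P. Kf c). {u, w} \<in> E} =
         {w \<in> Kf c. {u, w} \<in> E} \<union> (if u = c then {v} else {})"
proof
  have cc: "c \<in> ch T v" using Psub c by blast
  have ub: "u \<in> br T v c" using Kfb[OF c] u by blast
  show "{w \<in> insert v (\<Union>c\<in>P. Kf c). {u, w} \<in> E} \<subseteq> {w \<in> Kf c. {u, w} \<in> E} \<union> (if u = c then {v} else {})"
  proof
    fix w assume w: "w \<in> {w \<in> insert v (\<Union>c\<in>P. Kf c). {u, w} \<in> E}"
    then have e: "{u, w} \<in> E" by blast
    show "w \<in> {w \<in> Kf c. {u, w} \<in> E} \<union> (if u = c then {v} else {})"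
    proof (cases "w = v")
      case True
      then have "{v, u} \<in> E" using e by (simp add: insert_commute)
      then have "u = c" using br_v_adj[OF rs cc ub] by blast
      then show ?thesis using True by simp
    next
      case False
      then obtain c' where c': "c' \<in> P" "w \<in> Kf c'" using w by blast
      have "c' = c"
      proof (rule ccontr)
        assume "c' \<noteq> c"
        moreover have "w \<in> br T v c'" using Kfb[OF c'(1)] c'(2) by blast
        ultimately have "{u, w} \<notin> E" using br_noedge[OF rs cc _ _ ub] Psub c'(1) by blast
        then show False using e by blast
      qed
      then show ?thesis using c' e by blast
    qed
  qed
next
  show "{w \<in> Kf c. {u, w} \<in> E} \<union> (if u = c then {v} else {}) \<subseteq> {w \<in> insert v (\<Union>c\<in>P. Kf c). {u, w} \<in> E}"
  proof
    fix w assume w: "w \<in> {w \<in> Kf c. {u, w} \<in> E} \<union> (if u = c then {v} else {})"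
    show "w \<in> {w \<in> insert v (\<Union>c\<in>P. Kf c). {u, w} \<in> E}"
    proof (cases "w \<in> {w \<in> Kf c. {u, w} \<in> E}")
      case True then show ?thesis using c by blast
    next
      case False
      then have "u = c" "w = v" using w by (auto split: if_splits)
      moreover have "{v, c} \<in> E" using Psub c by (auto simp: ch_def)
      ultimately show ?thesis by (simp add: insert_commute)
    qed
  qed
qed

lemma st_deg_u:
  assumes c: "c \<in> P" and u: "u \<in> Kf c"
  shows "degree (induced E (insert v (\<Union>c\<in>P. Kf c))) u =
         degree (induced E (Kf c)) u + (if u = c then 1 else 0)"
proof -
  have uin: "u \<in> insert v (\<Union>c\<in>P. Kf c)" using c u by blast
  have "degree (induced E (insert v (\<Union>c\<in>P. Kf c))) u =
        card ({w \<in> Kf c. {u, w} \<in> E} \<union> (if u = c then {v} else {}))"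
    using deg_eq[OF uin] st_nbr_u[OF c u] by simp
  also have "\<dots> = card {w \<in> Kf c. {u, w} \<in> E} + card (if u = c then {v} else {})"
  proof (rule card_Un_disjoint)
    show "finite {w \<in> Kf c. {u, w} \<in> E}" using st_Kfin[OF c] by simp
    show "finite (if u = c then {v} else {})" by simp
    show "{w \<in> Kf c. {u, w} \<in> E} \<inter> (if u = c then {v} else {}) = {}" using st_vnot[OF c] by auto
  qed
  also have "\<dots> = degree (induced E (Kf c)) u + (if u = c then 1 else 0)"
    using deg_eq[OF u] by simp
  finally show ?thesis .
qed

lemma st_fin: "finite (insert v (\<Union>c\<in>P. Kf c))"
  using st_Pfin st_Kfin by blast

lemma st_sub: "insert v (\<Union>c\<in>P. Kf c) \<subseteq> V"
proof -
  have "v \<in> V" using rs by (auto simp: rsub_def)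
  moreover have "\<And>c. c \<in> P \<Longrightarrow> Kf c \<subseteq> V"
  proof -
    fix c assume c: "c \<in> P"
    have "Kf c \<subseteq> br T v c" using Kfb[OF c] .
    also have "\<dots> \<subseteq> T" using br_sub by blast
    also have "\<dots> \<subseteq> V" using rs by (simp add: rsub_def)
    finally show "Kf c \<subseteq> V" .
  qed
  ultimately show ?thesis by blast
qed

lemma st_conn: "conn (insert v (\<Union>c\<in>P. Kf c))"
proof -
  let ?K = "insert v (\<Union>c\<in>P. Kf c)"
  have fromv: "reach (induced E ?K) v x" if x: "x \<in> ?K" for x
  proof (cases "x = v")
    case True then show ?thesis by simp
  next
    case False
    then obtain c where c: "c \<in> P" "x \<in> Kf c" using x by blast
    have cc: "conn (Kf c)" using Kf[OF c(1)] unfolding pathpend_def by blast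
    have r0: "reach (induced E (Kf c)) c x"
      using cc st_cin[OF c(1)] c(2) unfolding conn_def by blast
    have sub: "induced E (Kf c) \<subseteq> induced E ?K" using c(1) by (intro induced_mono) blast
    have r: "reach (induced E ?K) c x" using reach_mono[OF sub r0] .
    have "{v, c} \<in> E" using Psub c(1) by (auto simp: ch_def)
    then have "{v, c} \<in> induced E ?K" using st_cin[OF c(1)] c(1) by (auto simp: induced_def)
    then have "reach (induced E ?K) v c" by (rule reach_edge)
    then show ?thesis using r by (rule reach_trans)
  qed
  show ?thesis unfolding conn_def
  proof (intro ballI)
    fix x y assume "x \<in> ?K" "y \<in> ?K"
    then have "reach (induced E ?K) v x" "reach (induced E ?K) v y"
      using fromv by blast+
    then have "reach (induced E ?K) x v" "reach (induced E ?K) v y"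
      using reach_sym[of "induced E ?K" v x] by blast+
    then show "reach (induced E ?K) x y" by (rule reach_trans)
  qed
qed

lemma st_sf:
  assumes c: "c \<in> P"
  shows "Kf c \<inter> S = {sfn (Kf c)} \<and>
      (\<forall>u\<in>Kf c. degree (induced E (Kf c)) u \<le> 1 \<longrightarrow> u = c \<or> u = sfn (Kf c)) \<and>
      degree (induced E (Kf c)) (sfn (Kf c)) \<le> 1 \<and> (sfn (Kf c) = c \<longrightarrow> Kf c = {c})"
proof -
  obtain s where s: "Kf c \<inter> S = {s}"
      "\<forall>u\<in>Kf c. degree (induced E (Kf c)) u \<le> 1 \<longrightarrow> u = c \<or> u = s"
      "degree (induced E (Kf c)) s \<le> 1" "s = c \<longrightarrow> Kf c = {c}"
    using Kf[OF c] unfolding pathpend_def by blast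
  have "sfn (Kf c) = s" unfolding sfn_def using s(1) by simp
  then show ?thesis using s by simp
qed

lemma st_sfeq: "c \<in> P \<Longrightarrow> Kf c \<inter> S = {sfn (Kf c)}"
  using st_sf by blast

lemma st_sfm: "c \<in> P \<Longrightarrow> sfn (Kf c) \<in> Kf c \<and> sfn (Kf c) \<in> S"
proof -
  assume c: "c \<in> P"
  have "sfn (Kf c) \<in> Kf c \<inter> S" using st_sfeq[OF c] by simp
  then show ?thesis by simp
qed

lemma st_sfdeg: "c \<in> P \<Longrightarrow> u \<in> Kf c \<Longrightarrow> degree (induced E (Kf c)) u \<le> 1 \<Longrightarrow> u = c \<or> u = sfn (Kf c)"
  using st_sf by blast

lemma st_sfd1: "c \<in> P \<Longrightarrow> degree (induced E (Kf c)) (sfn (Kf c)) \<le> 1"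
  using st_sf by blast

lemma st_sfc: "c \<in> P \<Longrightarrow> sfn (Kf c) = c \<Longrightarrow> Kf c = {c}"
  using st_sf by blast

lemma st_sf_in_S: "c \<in> P \<Longrightarrow> x \<in> Kf c \<Longrightarrow> x \<in> S \<Longrightarrow> x = sfn (Kf c)"
proof -
  assume "c \<in> P" "x \<in> Kf c" "x \<in> S"
  then have "x \<in> Kf c \<inter> S" by simp
  then show ?thesis using st_sfeq[OF \<open>c \<in> P\<close>] by simp
qed

lemma st_other_le2:
  assumes "u \<in> insert v (\<Union>c\<in>P. Kf c)" "u \<noteq> v"
  shows "degree (induced E (insert v (\<Union>c\<in>P. Kf c))) u \<le> 2"
proof -
  obtain c where c: "c \<in> P" "u \<in> Kf c" using assms by blast
  have "degree (induced E (Kf c)) u \<le> 2" "degree (induced E (Kf c)) c \<le> 1"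
    using Kf[OF c(1)] c(2) unfolding pathpend_def by blast+
  then show ?thesis using st_deg_u[OF c] by (cases "u = c") auto
qed

lemma st_leaf_c:
  assumes c: "c \<in> P" "degree (induced E (insert v (\<Union>c\<in>P. Kf c))) c = 1"
  shows "Kf c = {c}"
proof -
  have "degree (induced E (Kf c)) c = 0" using st_deg_u[OF c(1) st_cin[OF c(1)]] c(2) by simp
  then show ?thesis using pathpend_single Kf[OF c(1)] by blast
qed

lemma st_qc:
  assumes big: "card P \<ge> 2 \<or> (card P = 1 \<and> v \<in> S)"
  shows "quasi_clean S (insert v (\<Union>c\<in>P. Kf c)) (induced E (insert v (\<Union>c\<in>P. Kf c)))"
proof -
  let ?K = "insert v (\<Union>c\<in>P. Kf c)"
  let ?D = "degree (induced E ?K)"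
  have Pne: "P \<noteq> {}" using big by auto
  then obtain c0 where c0: "c0 \<in> P" by blast
  have tr: "tree ?K (induced E ?K)" using sub_tree[OF st_sub st_fin st_conn] by blast
  have card2: "card ?K \<ge> 2"
  proof -
    have "{v, c0} \<subseteq> ?K" using c0 st_cin[OF c0] by blast
    moreover have "v \<noteq> c0" using st_vnot[OF c0] st_cin[OF c0] by blast
    ultimately have "card {v, c0} = 2" by simp
    moreover have "card {v, c0} \<le> card ?K" using st_fin \<open>{v, c0} \<subseteq> ?K\<close> by (rule card_mono)
    ultimately show ?thesis by simp
  qed
  have big3: "u = v" if "u \<in> ?K" "?D u \<ge> 3" for u
  proof (rule ccontr)
    assume "u \<noteq> v"
    then have "?D u \<le> 2" using st_other_le2 that(1) by blast
    then show False using that(2) by simp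
  qed
  have leafS: "u \<in> S" if u: "u \<in> ?K" "?D u = 1" for u
  proof (cases "u = v")
    case True
    then have "card P = 1" using st_deg_v u(2) by simp
    then show ?thesis using big True by simp
  next
    case False
    then obtain c where c: "c \<in> P" "u \<in> Kf c" using u(1) by blast
    show ?thesis
    proof (cases "u = c")
      case True
      have "?D c = 1" using u(2) True by simp
      then have "Kf c = {c}" by (rule st_leaf_c[OF c(1)])
      have "sfn (Kf c) \<in> Kf c" using st_sfm[OF c(1)] by simp
      then have "sfn (Kf c) = c" using \<open>Kf c = {c}\<close> by simp
      then show ?thesis using st_sfm[OF c(1)] True by simp
    next
      case False
      then have "degree (induced E (Kf c)) u \<le> 1" using st_deg_u[OF c] u(2) by simp
      then have "u = sfn (Kf c)" using st_sfdeg[OF c(1) c(2)] False by simp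
      then show ?thesis using st_sfm[OF c(1)] by simp
    qed
  qed
  have sleaf: "?D (sfn (Kf c)) = 1" if c: "c \<in> P" for c
  proof (cases "sfn (Kf c) = c")
    case True
    then have Kc: "Kf c = {c}" using st_sfc[OF c] by simp
    have "?D c = degree (induced E (Kf c)) c + 1" using st_deg_u[OF c st_cin[OF c]] by simp
    then show ?thesis using Kc deg_single True by simp
  next
    case False
    have sin: "sfn (Kf c) \<in> Kf c" using st_sfm[OF c] by simp
    have "degree (induced E (Kf c)) (sfn (Kf c)) \<ge> 1"
      using conn_deg_pos[of "Kf c" "sfn (Kf c)" c] Kf[OF c] sin st_cin[OF c] False
      unfolding pathpend_def by blast
    moreover have "degree (induced E (Kf c)) (sfn (Kf c)) \<le> 1" using st_sfd1[OF c] .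
    ultimately show ?thesis using st_deg_u[OF c sin] False by simp
  qed
  have lv: "leaves ?K (induced E ?K) = {u \<in> ?K. ?D u = 1}"
    by (simp add: leaves_def)
  have KS: "?K \<inter> S = leaves ?K (induced E ?K) \<union> ({v} \<inter> S)"
  proof
    show "?K \<inter> S \<subseteq> leaves ?K (induced E ?K) \<union> ({v} \<inter> S)"
    proof
      fix x assume x: "x \<in> ?K \<inter> S"
      show "x \<in> leaves ?K (induced E ?K) \<union> ({v} \<inter> S)"
      proof (cases "x = v")
        case True then show ?thesis using x by blast
      next
        case False
        then obtain c where c: "c \<in> P" "x \<in> Kf c" using x by blast
        then have "x = sfn (Kf c)" using st_sf_in_S[OF c(1) c(2)] x by simp
        then show ?thesis using sleaf[OF c(1)] x lv by simp
      qed
    qed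
  next
    show "leaves ?K (induced E ?K) \<union> ({v} \<inter> S) \<subseteq> ?K \<inter> S"
      using leafS lv by blast
  qed
  show ?thesis
    unfolding quasi_clean_def subdivided_star_def
  proof (intro conjI)
    show "tree ?K (induced E ?K)" using tr .
    show "2 \<le> card ?K" using card2 .
    show "\<forall>u\<in>?K. \<forall>w\<in>?K. 3 \<le> ?D u \<and> 3 \<le> ?D w \<longrightarrow> u = w" using big3 by blast
    show "leaves ?K (induced E ?K) \<subseteq> S" using leafS lv by blast
    show "\<exists>X\<subseteq>?K. card X \<le> 1 \<and> ?K \<inter> S = leaves ?K (induced E ?K) \<union> X \<and>
          (\<forall>x\<in>X. \<forall>u\<in>?K. 3 \<le> ?D u \<longrightarrow> x = u)"
    proof (intro exI[of _ "{v} \<inter> S"] conjI)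
      show "{v} \<inter> S \<subseteq> ?K" by blast
      show "card ({v} \<inter> S) \<le> 1" by (cases "v \<in> S") auto
      show "?K \<inter> S = leaves ?K (induced E ?K) \<union> ({v} \<inter> S)" using KS .
      show "\<forall>x\<in>{v} \<inter> S. \<forall>u\<in>?K. 3 \<le> ?D u \<longrightarrow> x = u" using big3 by blast
    qed
  qed
qed

lemma st_pend:
  assumes small: "(P = {} \<and> v \<in> S) \<or> (card P = 1 \<and> v \<notin> S)"
  shows "pathpend v (insert v (\<Union>c\<in>P. Kf c))"
proof (cases "P = {}")
  case True
  then have vS: "v \<in> S" using small by auto
  have K: "insert v (\<Union>c\<in>P. Kf c) = {v}" using True by simp
  have d: "degree (induced E {v}) v = 0" using deg_single .
  have cv: "conn {v}" unfolding conn_def by simp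
  show ?thesis unfolding K pathpend_def
  proof (intro conjI)
    show "\<exists>s. {v} \<inter> S = {s} \<and> (\<forall>u\<in>{v}. degree (induced E {v}) u \<le> 1 \<longrightarrow> u = v \<or> u = s) \<and>
      degree (induced E {v}) s \<le> 1 \<and> (s = v \<longrightarrow> {v} = {v})"
      using vS d by (intro exI[of _ v]) simp
  qed (use d cv in simp_all)
next
  case False
  have cP: "card P = 1" "v \<notin> S" using small False by simp_all
  obtain j where Pj: "P = {j}" using card_1_singletonE[OF cP(1)] by metis
  have j: "j \<in> P" using Pj by simp
  let ?K = "insert v (\<Union>c\<in>P. Kf c)"
  let ?D = "degree (induced E ?K)"
  have K: "?K = insert v (Kf j)" using Pj by simp
  have dv: "?D v = 1" using st_deg_v cP by simp
  have leq1: "u = v \<or> u = sfn (Kf j)" if u: "u \<in> ?K" "?D u \<le> 1" for u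
  proof (cases "u = v")
    case True then show ?thesis by simp
  next
    case False
    then have uj: "u \<in> Kf j" using u(1) K by blast
    show ?thesis
    proof (cases "u = j")
      case True
      then have "degree (induced E (Kf j)) j = 0" using st_deg_u[OF j uj] u(2) by simp
      then have "Kf j = {j}" using pathpend_single Kf[OF j] by blast
      have "sfn (Kf j) \<in> Kf j" using st_sfm[OF j] by simp
      then have "sfn (Kf j) = j" using \<open>Kf j = {j}\<close> by simp
      then show ?thesis using True by simp
    next
      case False
      then have "degree (induced E (Kf j)) u \<le> 1" using st_deg_u[OF j uj] u(2) by simp
      then show ?thesis using st_sfdeg[OF j uj] False by simp
    qed
  qed
  have ds: "?D (sfn (Kf j)) \<le> 1"
  proof (cases "sfn (Kf j) = j")
    case True
    then have Kc: "Kf j = {j}" using st_sfc[OF j] by simp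
    have "?D j = degree (induced E (Kf j)) j + 1" using st_deg_u[OF j st_cin[OF j]] by simp
    then show ?thesis using Kc deg_single True by simp
  next
    case False
    have sin: "sfn (Kf j) \<in> Kf j" using st_sfm[OF j] by simp
    show ?thesis using st_deg_u[OF j sin] False st_sfd1[OF j] by simp
  qed
  have KjS: "Kf j \<inter> S = {sfn (Kf j)}" using st_sfeq[OF j] .
  have KS: "?K \<inter> S = {sfn (Kf j)}"
  proof -
    have "?K \<inter> S = ({v} \<inter> S) \<union> (Kf j \<inter> S)" using K by blast
    also have "\<dots> = {sfn (Kf j)}" using KjS cP(2) by simp
    finally show ?thesis .
  qed
  have svn: "sfn (Kf j) \<noteq> v" using KS cP(2) by blast
  show ?thesis unfolding pathpend_def
  proof (intro conjI)
    show "v \<in> ?K" by blast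
    show "finite ?K" using st_fin .
    show "conn ?K" using st_conn .
    show "\<forall>u\<in>?K. ?D u \<le> 2"
    proof
      fix u assume u: "u \<in> ?K"
      show "?D u \<le> 2"
      proof (cases "u = v")
        case True then show ?thesis using dv by simp
      next
        case False then show ?thesis using st_other_le2 u by blast
      qed
    qed
    show "?D v \<le> 1" using dv by simp
    have l1: "\<forall>u\<in>?K. ?D u \<le> 1 \<longrightarrow> u = v \<or> u = sfn (Kf j)" using leq1 by blast
    show "\<exists>s. ?K \<inter> S = {s} \<and> (\<forall>u\<in>?K. ?D u \<le> 1 \<longrightarrow> u = v \<or> u = s) \<and> ?D s \<le> 1 \<and> (s = v \<longrightarrow> ?K = {v})"
      apply (rule exI[of _ "sfn (Kf j)"])
      using KS l1 ds svn by simp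
  qed
qed

end

end



context FS begin

lemma sep_br:
  assumes "rsub T v" "c \<in> ch T v" "c' \<in> ch T v" "c \<noteq> c'"
  shows "sep (br T v c) (br T v c')"
  unfolding sep_def using br_disj[OF assms] br_noedge[OF assms] by blast

lemma card_ins_UN:
  assumes "rsub T v" "\<And>c. c \<in> ch T v \<Longrightarrow> g c \<subseteq> br T v c"
  shows "card (insert v (\<Union>c\<in>ch T v. g c) \<inter> S) = (if v \<in> S then 1 else 0) + (\<Sum>c\<in>ch T v. card (g c \<inter> S))"
    and "card ((\<Union>c\<in>ch T v. g c) \<inter> S) = (\<Sum>c\<in>ch T v. card (g c \<inter> S))"
proof -
  have fin: "\<And>c. c \<in> ch T v \<Longrightarrow> finite (g c \<inter> S)"
    using assms(2) br_fin[OF assms(1)] by (meson finite_Int finite_subset)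
  have U: "card (\<Union>c\<in>ch T v. g c \<inter> S) = (\<Sum>c\<in>ch T v. card (g c \<inter> S))"
  proof (rule card_UN_disjoint)
    show "finite (ch T v)" using ch_fin[OF assms(1)] .
    show "\<forall>i\<in>ch T v. finite (g i \<inter> S)" using fin by blast
    show "\<forall>i\<in>ch T v. \<forall>j\<in>ch T v. i \<noteq> j \<longrightarrow> g i \<inter> S \<inter> (g j \<inter> S) = {}"
    proof (intro ballI impI)
      fix i j assume "i \<in> ch T v" "j \<in> ch T v" "i \<noteq> j"
      then have "br T v i \<inter> br T v j = {}" using br_disj[OF assms(1)] by blast
      then show "g i \<inter> S \<inter> (g j \<inter> S) = {}" using assms(2) \<open>i \<in> ch T v\<close> \<open>j \<in> ch T v\<close> by blast
    qed
  qed
  have e1: "(\<Union>c\<in>ch T v. g c) \<inter> S = (\<Union>c\<in>ch T v. g c \<inter> S)" by blast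
  show "card ((\<Union>c\<in>ch T v. g c) \<inter> S) = (\<Sum>c\<in>ch T v. card (g c \<inter> S))" unfolding e1 by (rule U)
  have vn: "v \<notin> (\<Union>c\<in>ch T v. g c)" using assms(2) v_notin_br by blast
  have finU: "finite (\<Union>c\<in>ch T v. g c \<inter> S)" using fin ch_fin[OF assms(1)] by blast
  have e2: "insert v (\<Union>c\<in>ch T v. g c) \<inter> S = ({v} \<inter> S) \<union> (\<Union>c\<in>ch T v. g c \<inter> S)" by blast
  have "card (({v} \<inter> S) \<union> (\<Union>c\<in>ch T v. g c \<inter> S)) = card ({v} \<inter> S) + card (\<Union>c\<in>ch T v. g c \<inter> S)"
    by (rule card_Un_disjoint) (use vn finU in auto)
  moreover have "card ({v} \<inter> S) = (if v \<in> S then 1 else 0)" by simp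
  ultimately show "card (insert v (\<Union>c\<in>ch T v. g c) \<inter> S) = (if v \<in> S then 1 else 0) + (\<Sum>c\<in>ch T v. card (g c \<inter> S))"
    using e2 U by simp
qed

lemma asm_union:
  assumes "rsub T v" "\<And>c. c \<in> ch T v \<Longrightarrow> g c \<subseteq> br T v c \<and> good (g c)"
  shows "good (\<Union>c\<in>ch T v. g c)" "(\<Union>c\<in>ch T v. g c) \<subseteq> T - {v}"
proof -
  show "good (\<Union>c\<in>ch T v. g c)"
  proof (rule good_UN)
    show "finite (ch T v)" using ch_fin[OF assms(1)] .
    show "\<And>i. i \<in> ch T v \<Longrightarrow> good (g i)" using assms(2) by blast
    fix i j assume ij: "i \<in> ch T v" "j \<in> ch T v" "i \<noteq> j"
    have "g i \<subseteq> br T v i" "g j \<subseteq> br T v j" using assms(2) ij by blast+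
    then show "sep (g i) (g j)" using sep_mono[OF sep_br[OF assms(1) ij]] by blast
  qed
  show "(\<Union>c\<in>ch T v. g c) \<subseteq> T - {v}" using assms(2) br_sub by blast
qed

lemma asm_star:
  assumes rs: "rsub T v" and Psub: "P \<subseteq> ch T v"
    and gP: "\<And>c. c \<in> P \<Longrightarrow> pend (br T v c) c (g c)"
    and gN: "\<And>c. c \<in> ch T v \<Longrightarrow> c \<notin> P \<Longrightarrow> g c \<subseteq> br T v c - {c} \<and> good (g c)"
  shows "(card P \<ge> 2 \<or> (card P = 1 \<and> v \<in> S)) \<Longrightarrow> good (insert v (\<Union>c\<in>ch T v. g c))"
    and "((P = {} \<and> v \<in> S) \<or> (card P = 1 \<and> v \<notin> S)) \<Longrightarrow> pend T v (insert v (\<Union>c\<in>ch T v. g c))"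
proof -
  have "\<forall>c\<in>P. \<exists>KR. g c = fst KR \<union> snd KR \<and> pathpend c (fst KR) \<and> good (snd KR) \<and> sep (fst KR) (snd KR)
          \<and> g c \<subseteq> br T v c"
  proof
    fix c assume c: "c \<in> P"
    obtain K R where "g c = K \<union> R" "pathpend c K" "good R" "sep K R" "g c \<subseteq> br T v c"
      using gP[OF c] unfolding pend_def by blast
    then show "\<exists>KR. g c = fst KR \<union> snd KR \<and> pathpend c (fst KR) \<and> good (snd KR) \<and> sep (fst KR) (snd KR)
          \<and> g c \<subseteq> br T v c" by (intro exI[of _ "(K, R)"]) simp
  qed
  then obtain kr where kr: "\<And>c. c \<in> P \<Longrightarrow> g c = fst (kr c) \<union> snd (kr c) \<and> pathpend c (fst (kr c)) \<and>
      good (snd (kr c)) \<and> sep (fst (kr c)) (snd (kr c)) \<and> g c \<subseteq> br T v c"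
    by metis
  define Kf where "Kf = (\<lambda>c. fst (kr c))"
  define Rf where "Rf = (\<lambda>c. snd (kr c))"
  have gKR: "\<And>c. c \<in> P \<Longrightarrow> g c = Kf c \<union> Rf c" using kr unfolding Kf_def Rf_def by blast
  have Kfp: "\<And>c. c \<in> P \<Longrightarrow> pathpend c (Kf c)" using kr unfolding Kf_def by blast
  have Rfg: "\<And>c. c \<in> P \<Longrightarrow> good (Rf c)" using kr unfolding Rf_def by blast
  have KRs: "\<And>c. c \<in> P \<Longrightarrow> sep (Kf c) (Rf c)" using kr unfolding Kf_def Rf_def by blast
  have gb: "\<And>c. c \<in> P \<Longrightarrow> g c \<subseteq> br T v c" using kr by blast
  have Kfb: "\<And>c. c \<in> P \<Longrightarrow> Kf c \<subseteq> br T v c" using gb gKR by blast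
  have Rfb: "\<And>c. c \<in> P \<Longrightarrow> Rf c \<subseteq> br T v c" using gb gKR by blast
  have cK: "\<And>c. c \<in> P \<Longrightarrow> c \<in> Kf c" using Kfp unfolding pathpend_def by blast
  have cR: "\<And>c. c \<in> P \<Longrightarrow> c \<notin> Rf c" using KRs cK unfolding sep_def by blast
  define h where "h = (\<lambda>c. if c \<in> P then Rf c else g c)"
  have hb: "h c \<subseteq> br T v c \<and> good (h c)" if c: "c \<in> ch T v" for c
  proof (cases "c \<in> P")
    case True then show ?thesis using Rfb Rfg unfolding h_def by simp
  next
    case False
    then have "g c \<subseteq> br T v c - {c} \<and> good (g c)" using gN c by blast
    then show ?thesis using False unfolding h_def by auto
  qed
  have hc: "\<And>c. c \<in> ch T v \<Longrightarrow> c \<notin> h c"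
    using cR gN unfolding h_def by auto
  let ?K = "insert v (\<Union>c\<in>P. Kf c)"
  let ?R = "\<Union>c\<in>ch T v. h c"
  have FKR: "insert v (\<Union>c\<in>ch T v. g c) = ?K \<union> ?R"
  proof
    show "insert v (\<Union>c\<in>ch T v. g c) \<subseteq> ?K \<union> ?R"
    proof
      fix x assume "x \<in> insert v (\<Union>c\<in>ch T v. g c)"
      then consider "x = v" | c where "c \<in> ch T v" "x \<in> g c" by blast
      then show "x \<in> ?K \<union> ?R"
      proof cases
        case 1 then show ?thesis by blast
      next
        case 2
        show ?thesis
        proof (cases "c \<in> P")
          case True
          then have "x \<in> Kf c \<or> x \<in> Rf c" using gKR 2(2) by blast
          then show ?thesis using True 2(1) unfolding h_def by auto
        next
          case False then show ?thesis using 2 unfolding h_def by auto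
        qed
      qed
    qed
  next
    show "?K \<union> ?R \<subseteq> insert v (\<Union>c\<in>ch T v. g c)"
      using gKR Psub unfolding h_def by (auto split: if_splits)
  qed
  have goodR: "good ?R" using asm_union(1)[OF rs hb] .
  have sepKR: "sep ?K ?R"
    unfolding sep_def
  proof (intro conjI ballI)
    show "?K \<inter> ?R = {}"
    proof (rule ccontr)
      assume "?K \<inter> ?R \<noteq> {}"
      then obtain x where x: "x \<in> ?K" "x \<in> ?R" by blast
      then obtain c where c: "c \<in> ch T v" "x \<in> h c" by blast
      have xb: "x \<in> br T v c" using hb[OF c(1)] c(2) by blast
      then have "x \<noteq> v" using v_notin_br by blast
      then obtain c' where c': "c' \<in> P" "x \<in> Kf c'" using x(1) by blast
      have "x \<in> br T v c'" using Kfb[OF c'(1)] c'(2) by blast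
      then have "c' = c" using br_eq[OF rs _ c(1) _ xb] Psub c'(1) by blast
      then have "x \<in> Rf c" using c(2) c'(1) unfolding h_def by simp
      then show False using KRs[OF c'(1)] c'(2) \<open>c' = c\<close> unfolding sep_def by blast
    qed
  next
    fix x y assume x: "x \<in> ?K" and y: "y \<in> ?R"
    then obtain c where c: "c \<in> ch T v" "y \<in> h c" by blast
    have yb: "y \<in> br T v c" using hb[OF c(1)] c(2) by blast
    show "{x, y} \<notin> E"
    proof
      assume e: "{x, y} \<in> E"
      show False
      proof (cases "x = v")
        case True
        then have "y = c" using br_v_adj[OF rs c(1) yb] e by simp
        then show False using hc[OF c(1)] c(2) by simp
      next
        case False
        then obtain c' where c': "c' \<in> P" "x \<in> Kf c'" using x by blast
        have xb: "x \<in> br T v c'" using Kfb[OF c'(1)] c'(2) by blast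
        have c'ch: "c' \<in> ch T v" using Psub c'(1) by blast
        show False
        proof (cases "c' = c")
          case True
          then have "y \<in> Rf c" using c(2) c'(1) unfolding h_def by simp
          then show False using KRs[OF c'(1)] c'(2) e True unfolding sep_def by blast
        next
          case False
          then show False using br_noedge[OF rs c'ch c(1) False xb yb] e by simp
        qed
      qed
    qed
  qed
  show "(card P \<ge> 2 \<or> (card P = 1 \<and> v \<in> S)) \<Longrightarrow> good (insert v (\<Union>c\<in>ch T v. g c))"
  proof -
    assume big: "card P \<ge> 2 \<or> (card P = 1 \<and> v \<in> S)"
    have "quasi_clean S ?K (induced E ?K)" using st_qc[OF rs Psub Kfp Kfb big] .
    then have "good ?K" by (rule good_qc)
    then have "good (?K \<union> ?R)" using goodR sepKR by (rule good_Un)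
    then show ?thesis using FKR by simp
  qed
  show "((P = {} \<and> v \<in> S) \<or> (card P = 1 \<and> v \<notin> S)) \<Longrightarrow> pend T v (insert v (\<Union>c\<in>ch T v. g c))"
  proof -
    assume small: "(P = {} \<and> v \<in> S) \<or> (card P = 1 \<and> v \<notin> S)"
    have pp: "pathpend v ?K" using st_pend[OF rs Psub Kfp Kfb small] .
    have sub: "insert v (\<Union>c\<in>ch T v. g c) \<subseteq> T"
    proof -
      have "\<And>c. c \<in> ch T v \<Longrightarrow> g c \<subseteq> br T v c" using gb gN by blast
      then show ?thesis using br_sub rs unfolding rsub_def by blast
    qed
    show ?thesis unfolding pend_def using sub FKR pp goodR sepKR by blast
  qed
qed

lemma leaf_exists:
  assumes "rsub T v" "T \<noteq> {v}"
  shows "\<exists>u\<in>T - {v}. degree E u = 1"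
  using assms
proof (induction "card T" arbitrary: T v rule: less_induct)
  case less
  have vT: "v \<in> T" using less.prems(1) by (simp add: rsub_def)
  obtain x where x: "x \<in> T" "x \<noteq> v" using less.prems(2) vT by blast
  obtain c where c: "c \<in> ch T v" "x \<in> br T v c" using br_cover[OF less.prems(1) x] by blast
  have cT: "c \<in> T - {v}" using ch_in_br[OF c(1)] br_sub by blast
  show ?case
  proof (cases "br T v c = {c}")
    case True
    have "{w. {c, w} \<in> E} = {v}"
    proof
      show "{w. {c, w} \<in> E} \<subseteq> {v}"
      proof
        fix w assume "w \<in> {w. {c, w} \<in> E}"
        then have e: "{c, w} \<in> E" by simp
        have wc: "w \<noteq> c" using edge_neq[OF e] by simp
        show "w \<in> {v}"
        proof (rule ccontr)
          assume wv: "w \<notin> {v}"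
          show False
          proof (cases "w \<in> T")
            case False
            then have "c = v" using less.prems(1) cT e unfolding rsub_def by blast
            then show False using cT by simp
          next
            case True
            then have "{c, w} \<in> induced E (T - {v})" using e cT wv by (auto simp: induced_def)
            moreover have "reach (induced E (T - {v})) c c" by simp
            ultimately have "reach (induced E (T - {v})) c w" using reach_step by metis
            then have "w \<in> br T v c" using True wv by (auto simp: br_def)
            then show False using \<open>br T v c = {c}\<close> wc by simp
          qed
        qed
      qed
    next
      have "{v, c} \<in> E" using c(1) by (simp add: ch_def)
      then show "{v} \<subseteq> {w. {c, w} \<in> E}" by (simp add: insert_commute)
    qed
    then have "degree E c = 1" by (simp add: degree_def)
    then show ?thesis using cT by blast
  next
    case False
    have rs': "rsub (br T v c) c" using rsub_br[OF less.prems(1) c(1)] .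
    have lt: "card (br T v c) < card T" using br_card_less[OF less.prems(1) c(1)] .
    obtain u where u: "u \<in> br T v c - {c}" "degree E u = 1"
      using less.hyps[OF lt rs' False] by blast
    then show ?thesis using br_sub by blast
  qed
qed

lemma induced_V: "induced E V = E"
  using edgeE by (auto simp: induced_def)

lemma comp_rsub:
  assumes "w \<in> V"
  shows "rsub {u \<in> V. reach E w u} w" and "\<forall>x\<in>{u \<in> V. reach E w u}. \<forall>y. {x, y} \<in> E \<longrightarrow> y \<in> {u \<in> V. reach E w u}"
proof -
  let ?C = "{u \<in> V. reach E w u}"
  show closed: "\<forall>x\<in>?C. \<forall>y. {x, y} \<in> E \<longrightarrow> y \<in> ?C"
  proof (intro ballI allI impI)
    fix x y assume x: "x \<in> ?C" and e: "{x, y} \<in> E"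
    have "y \<in> V" using edge_in[OF e] by simp
    moreover have "reach E w y" using reach_step[of E w x y] x e by simp
    ultimately show "y \<in> ?C" by simp
  qed
  show "rsub ?C w"
    unfolding rsub_def
  proof (intro conjI ballI allI impI)
    show "?C \<subseteq> V" by blast
    show "w \<in> ?C" using assms by simp
  next
    fix x assume "x \<in> ?C"
    then have "reach (induced E V) w x" using induced_V by simp
    then have "reach (induced E {x \<in> V. reach (induced E V) w x}) w x" by (rule reach_restrict)
    then show "reach (induced E ?C) w x" using induced_V by simp
  next
    fix x y assume "x \<in> ?C" "{x, y} \<in> E" "y \<notin> ?C"
    then show "x = w" using closed by blast
  qed
qed

lemma rsub_reroot:
  assumes "rsub T v" "\<forall>x\<in>T. \<forall>y. {x, y} \<in> E \<longrightarrow> y \<in> T" "u \<in> T"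
  shows "rsub T u"
  unfolding rsub_def
proof (intro conjI ballI allI impI)
  show "T \<subseteq> V" using assms(1) by (simp add: rsub_def)
  show "u \<in> T" using assms(3) .
next
  fix x assume "x \<in> T"
  then have "reach (induced E T) v x" "reach (induced E T) v u" using assms(1,3) by (auto simp: rsub_def)
  then show "reach (induced E T) u x" using reach_sym reach_trans by metis
next
  fix x y assume "x \<in> T" "{x, y} \<in> E" "y \<notin> T"
  then show "x = u" using assms(2) by blast
qed

lemma two_leaves:
  assumes "rsub T v" "\<forall>x\<in>T. \<forall>y. {x, y} \<in> E \<longrightarrow> y \<in> T" "card T \<ge> 2" "leaves V E \<subseteq> S"
  shows "card (T \<inter> S) \<ge> 2"
proof -
  have fin: "finite T" using rsub_fin[OF assms(1)] .
  have vT: "v \<in> T" using assms(1) by (simp add: rsub_def)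
  have TV: "T \<subseteq> V" using assms(1) by (simp add: rsub_def)
  have "T \<noteq> {v}" using assms(3) by auto
  then obtain l1 where l1: "l1 \<in> T - {v}" "degree E l1 = 1" using leaf_exists[OF assms(1)] by blast
  have rs1: "rsub T l1" using rsub_reroot[OF assms(1,2)] l1(1) by blast
  have "T \<noteq> {l1}" using assms(3) by auto
  then obtain l2 where l2: "l2 \<in> T - {l1}" "degree E l2 = 1" using leaf_exists[OF rs1] by blast
  have "l1 \<in> S" "l2 \<in> S" using l1 l2 TV assms(4) unfolding leaves_def by blast+
  then have "{l1, l2} \<subseteq> T \<inter> S" using l1(1) l2(1) by blast
  moreover have "card {l1, l2} = 2" using l2(1) by auto
  ultimately show ?thesis using fin by (metis card_mono finite_Int)
qed

end



context FS begin

definition claimb :: "'a set \<Rightarrow> 'a \<Rightarrow> 'a set \<Rightarrow> 'a set \<Rightarrow> 'a set \<Rightarrow> bool" where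
  "claimb T v FX FZ FY \<longleftrightarrow> FX \<subseteq> T - {v} \<and> good FX \<and> FZ \<subseteq> T \<and> good FZ \<and>
     card (FX \<inter> S) \<le> card (FZ \<inter> S) \<and>
     (2 \<le> card (T \<inter> S) \<longrightarrow> card (T \<inter> S) \<le> 2 * card (FZ \<inter> S) \<and>
        card (T \<inter> S) \<le> card (FX \<inter> S) + card (FZ \<inter> S) \<and>
        (card (T \<inter> S) + 1 \<le> card (FX \<inter> S) + card (FZ \<inter> S) \<or>
         (pend T v FY \<and> card (T \<inter> S) + 1 \<le> card (FY \<inter> S) + card (FZ \<inter> S)))) \<and>
     (card (T \<inter> S) = 1 \<longrightarrow> pend T v FY \<and> 1 \<le> card (FY \<inter> S))"

definition claim :: "'a set \<Rightarrow> 'a \<Rightarrow> bool" where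
  "claim T v \<longleftrightarrow> (\<exists>FX FZ FY. claimb T v FX FZ FY)"

lemma asm_sub:
  assumes "rsub T v" "\<And>c. c \<in> ch T v \<Longrightarrow> g c \<subseteq> br T v c"
  shows "insert v (\<Union>c\<in>ch T v. g c) \<subseteq> T"
  using assms br_sub unfolding rsub_def by blast

lemma sum_ind: "finite A \<Longrightarrow> (\<Sum>c\<in>A. if P c then 1 else 0) = card {c \<in> A. P c}"
  by (simp add: sum.inter_filter[symmetric])


lemma dp_step:
  assumes rs: "rsub T v" and IH: "\<And>c. c \<in> ch T v \<Longrightarrow> claim (br T v c) c"
  shows "claim T v"
proof -
  let ?Ch = "ch T v"
  have finCh: "finite ?Ch" using ch_fin[OF rs] .
  have ex: "\<forall>c\<in>?Ch. \<exists>t. claimb (br T v c) c (fst t) (fst (snd t)) (snd (snd t))"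
  proof
    fix c assume "c \<in> ?Ch"
    then obtain A B D where "claimb (br T v c) c A B D" using IH unfolding claim_def by blast
    then show "\<exists>t. claimb (br T v c) c (fst t) (fst (snd t)) (snd (snd t))"
      by (intro exI[of _ "(A, B, D)"]) simp
  qed
  obtain t where t: "\<forall>c\<in>?Ch. claimb (br T v c) c (fst (t c)) (fst (snd (t c))) (snd (snd (t c)))"
    using bchoice[OF ex] by (elim exE) simp
  define fx where "fx c = fst (t c)" for c
  define fz where "fz c = fst (snd (t c))" for c
  define fy where "fy c = snd (snd (t c))" for c
  define nc where "nc c = card (br T v c \<inter> S)" for c
  define px where "px c = card (fx c \<inter> S)" for c
  define qz where "qz c = card (fz c \<inter> S)" for c
  define yy where "yy c = card (fy c \<inter> S)" for c
  have cl: "claimb (br T v c) c (fx c) (fz c) (fy c)" if "c \<in> ?Ch" for c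
    using t that unfolding fx_def fz_def fy_def by blast
  have cx: "fx c \<subseteq> br T v c - {c} \<and> good (fx c)" if "c \<in> ?Ch" for c
    using cl[OF that] unfolding claimb_def by blast
  have cz: "fz c \<subseteq> br T v c \<and> good (fz c)" if "c \<in> ?Ch" for c
    using cl[OF that] unfolding claimb_def by blast
  have cpq: "px c \<le> qz c" if "c \<in> ?Ch" for c
    using cl[OF that] unfolding claimb_def px_def qz_def by blast
  have cM: "nc c \<le> 2 * qz c \<and> nc c \<le> px c + qz c \<and>
      (nc c + 1 \<le> px c + qz c \<or> (pend (br T v c) c (fy c) \<and> nc c + 1 \<le> yy c + qz c))"
    if "c \<in> ?Ch" "2 \<le> nc c" for c
  proof -
    have "2 \<le> card (br T v c \<inter> S)" using that(2) unfolding nc_def .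
    then show ?thesis using cl[OF that(1)] unfolding claimb_def nc_def px_def qz_def yy_def by blast
  qed
  have cO: "pend (br T v c) c (fy c) \<and> 1 \<le> yy c" if "c \<in> ?Ch" "nc c = 1" for c
  proof -
    have "card (br T v c \<inter> S) = 1" using that(2) unfolding nc_def .
    then show ?thesis using cl[OF that(1)] unfolding claimb_def yy_def by blast
  qed
  have fyb: "fy c \<subseteq> br T v c" if "pend (br T v c) c (fy c)" for c
    using that unfolding pend_def by blast
  define Oc where "Oc = {c \<in> ch T v. nc c = 1}"
  define Mc where "Mc = {c \<in> ch T v. 2 \<le> nc c}"
  define Gc where "Gc = {c \<in> ch T v. 2 \<le> nc c \<and> nc c + 1 \<le> px c + qz c}"
  define Hc where "Hc = {c \<in> ch T v. 2 \<le> nc c \<and> \<not> nc c + 1 \<le> px c + qz c}"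
  have cH: "pend (br T v c) c (fy c) \<and> nc c + 1 \<le> yy c + qz c \<and> px c + qz c = nc c" if "c \<in> Hc" for c
  proof -
    have c: "c \<in> ?Ch" "2 \<le> nc c" "\<not> nc c + 1 \<le> px c + qz c" using that unfolding Hc_def by auto
    show ?thesis using cM[OF c(1,2)] c(3) by auto
  qed
  have cG: "nc c + 1 \<le> px c + qz c" if "c \<in> Gc" for c using that unfolding Gc_def by auto
  have MGH: "Mc = Gc \<union> Hc" unfolding Mc_def Gc_def Hc_def by auto
  have GH: "Gc \<inter> Hc = {}" unfolding Gc_def Hc_def by auto
  have OM: "Oc \<inter> Mc = {}" unfolding Oc_def Mc_def by auto
  have OH: "Oc \<inter> Hc = {}" unfolding Oc_def Hc_def by auto
  have subs: "Oc \<subseteq> ?Ch" "Mc \<subseteq> ?Ch" "Gc \<subseteq> ?Ch" "Hc \<subseteq> ?Ch" unfolding Oc_def Mc_def Gc_def Hc_def by auto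
  have finOGH: "finite Oc" "finite Mc" "finite Gc" "finite Hc" using subs finCh finite_subset by blast+
  define s where "s = (if v \<in> S then 1 else 0 :: nat)"
  have n_eq: "card (T \<inter> S) = s + (\<Sum>c\<in>?Ch. nc c)" using card_T_S[OF rs] unfolding s_def nc_def .
  define gX where "gX c = (if 2 \<le> nc c then fz c else {})" for c
  have gXp: "gX c \<subseteq> br T v c \<and> good (gX c)" if "c \<in> ?Ch" for c
    using cz[OF that] unfolding gX_def by auto
  define FX where "FX = (\<Union>c\<in>ch T v. gX c)"
  have FXgood: "good FX" using asm_union(1)[OF rs gXp] unfolding FX_def .
  have FXsub: "FX \<subseteq> T - {v}" using asm_union(2)[OF rs gXp] unfolding FX_def .
  define a where "a c = card (gX c \<inter> S)" for c
  have pv: "card (FX \<inter> S) = (\<Sum>c\<in>?Ch. a c)"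
    using card_ins_UN(2)[OF rs, of gX] gXp unfolding FX_def a_def by blast
  define gS where "gS c = (if c \<in> Oc \<union> Hc then fy c else if c \<in> Gc then fx c else {})" for c
  define b where "b c = card (gS c \<inter> S)" for c
  define Fst where "Fst = insert v (\<Union>c\<in>ch T v. gS c)"
  have OHsub: "Oc \<union> Hc \<subseteq> ?Ch" using subs by blast
  have pOH: "pend (br T v c) c (fy c)" if "c \<in> Oc \<union> Hc" for c
  proof (cases "c \<in> Oc")
    case True then show ?thesis using cO unfolding Oc_def by blast
  next
    case False then have "c \<in> Hc" using that by blast
    then show ?thesis using cH by blast
  qed
  have gSP: "pend (br T v c) c (gS c)" if "c \<in> Oc \<union> Hc" for c
    using pOH[OF that] that unfolding gS_def by simp
  have gSN: "gS c \<subseteq> br T v c - {c} \<and> good (gS c)" if "c \<in> ?Ch" "c \<notin> Oc \<union> Hc" for c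
    using cx[OF that(1)] that(2) unfolding gS_def by auto
  have gSb: "gS c \<subseteq> br T v c" if "c \<in> ?Ch" for c
  proof (cases "c \<in> Oc \<union> Hc")
    case True then show ?thesis using fyb[OF pOH[OF True]] unfolding gS_def by simp
  next
    case False then show ?thesis using gSN[OF that False] by blast
  qed
  have Fst_good: "good Fst" if "card (Oc \<union> Hc) \<ge> 2 \<or> (card (Oc \<union> Hc) = 1 \<and> v \<in> S)"
    using asm_star(1)[OF rs OHsub gSP gSN that] unfolding Fst_def by blast
  have Fst_sub: "Fst \<subseteq> T" using asm_sub[OF rs gSb] unfolding Fst_def .
  have Fst_card: "card (Fst \<inter> S) = s + (\<Sum>c\<in>?Ch. b c)"
    using card_ins_UN(1)[OF rs, of gS] gSb unfolding Fst_def b_def s_def by blast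
  define gP where "gP c = (if 2 \<le> nc c then fx c else {})" for c
  define d where "d c = card (gP c \<inter> S)" for c
  define FY1 where "FY1 = insert v (\<Union>c\<in>ch T v. gP c)"
  have gPN: "gP c \<subseteq> br T v c - {c} \<and> good (gP c)" if "c \<in> ?Ch" for c
    using cx[OF that] unfolding gP_def by auto
  have FY1_pend: "pend T v FY1" if "v \<in> S"
    using asm_star(2)[OF rs, of "{}" gP] gPN that unfolding FY1_def by auto
  have FY1_card: "card (FY1 \<inter> S) = s + (\<Sum>c\<in>?Ch. d c)"
    using card_ins_UN(1)[OF rs, of gP] gPN unfolding FY1_def d_def s_def by blast
  define gJ where "gJ j c = (if c = j then fy j else gP c)" for j c
  define e where "e j c = card (gJ j c \<inter> S)" for j c
  define FYJ where "FYJ j = insert v (\<Union>c\<in>ch T v. gJ j c)" for j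
  have FYJ_pend: "pend T v (FYJ j)" if j: "j \<in> Oc \<union> Hc" and vS: "v \<notin> S" for j
  proof -
    have jc: "{j} \<subseteq> ?Ch" using j OHsub by blast
    have P1: "\<And>c. c \<in> {j} \<Longrightarrow> pend (br T v c) c (gJ j c)" using pOH[OF j] unfolding gJ_def by simp
    have P2: "\<And>c. c \<in> ?Ch \<Longrightarrow> c \<notin> {j} \<Longrightarrow> gJ j c \<subseteq> br T v c - {c} \<and> good (gJ j c)"
      using gPN unfolding gJ_def by simp
    show ?thesis using asm_star(2)[OF rs jc P1 P2] vS unfolding FYJ_def by simp
  qed
  have gJb: "gJ j c \<subseteq> br T v c" if "j \<in> Oc \<union> Hc" "c \<in> ?Ch" for j c
    using fyb[OF pOH[OF that(1)]] gPN[OF that(2)] unfolding gJ_def by auto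
  have FYJ_card: "card (FYJ j \<inter> S) = s + (\<Sum>c\<in>?Ch. e j c)" if "j \<in> Oc \<union> Hc" for j
    using card_ins_UN(1)[OF rs, of "gJ j"] gJb[OF that] unfolding FYJ_def e_def s_def by blast
  have a_eq: "a c = (if c \<in> Mc then qz c else 0)" if "c \<in> ?Ch" for c
    using that unfolding a_def gX_def qz_def Mc_def by auto
  have b_eq: "b c = (if c \<in> Oc \<union> Hc then yy c else if c \<in> Gc then px c else 0)" for c
    unfolding b_def gS_def yy_def px_def by auto
  have d_eq: "d c = (if c \<in> Mc then px c else 0)" if "c \<in> ?Ch" for c
    using that unfolding d_def gP_def px_def Mc_def by auto
  have e_eq: "e j c = (if c = j then yy j else d c)" for j c
    unfolding e_def gJ_def yy_def d_def by auto
  have cls: "nc c = 0 \<or> c \<in> Oc \<or> c \<in> Gc \<or> c \<in> Hc" if "c \<in> ?Ch" for c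
    using that unfolding Oc_def Gc_def Hc_def by auto
  have memM: "c \<in> Mc \<longleftrightarrow> 2 \<le> nc c" if "c \<in> ?Ch" for c using that unfolding Mc_def by auto
  have memO: "c \<in> Oc \<longleftrightarrow> nc c = 1" if "c \<in> ?Ch" for c using that unfolding Oc_def by auto
  have memG: "c \<in> Gc \<longleftrightarrow> 2 \<le> nc c \<and> nc c + 1 \<le> px c + qz c" if "c \<in> ?Ch" for c
    using that unfolding Gc_def by auto
  have memH: "c \<in> Hc \<longleftrightarrow> 2 \<le> nc c \<and> \<not> nc c + 1 \<le> px c + qz c" if "c \<in> ?Ch" for c
    using that unfolding Hc_def by auto
  have pw1: "nc c + (if c \<in> Mc then 1 else 0) \<le> a c + b c" if c: "c \<in> ?Ch" for c
  proof -
    consider "nc c = 0" | "c \<in> Oc" | "c \<in> Gc" | "c \<in> Hc" using cls[OF c] by auto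
    then show ?thesis
    proof cases
      case 1 then show ?thesis using memM[OF c] by simp
    next
      case 2 then show ?thesis using memM[OF c] memO[OF c] a_eq[OF c] b_eq[of c] cO[OF c] by simp
    next
      case 3
      then have "c \<notin> Oc" "c \<notin> Hc" "c \<in> Mc" using memO[OF c] memG[OF c] memH[OF c] memM[OF c] by auto
      then show ?thesis using 3 a_eq[OF c] b_eq[of c] cG[OF 3] by simp
    next
      case 4
      then have "c \<in> Mc" using memH[OF c] memM[OF c] by auto
      then show ?thesis using 4 a_eq[OF c] b_eq[of c] cH[OF 4] by simp
    qed
  qed
  have pw2: "nc c + (if c \<in> Gc then 1 else 0) \<le> 2 * a c + (if c \<in> Oc then 1 else 0)" if c: "c \<in> ?Ch" for c
  proof -
    consider "nc c = 0" | "c \<in> Oc" | "c \<in> Gc" | "c \<in> Hc" using cls[OF c] by auto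
    then show ?thesis
    proof cases
      case 1 then show ?thesis using memG[OF c] memO[OF c] by simp
    next
      case 2 then show ?thesis using memG[OF c] memO[OF c] by simp
    next
      case 3
      then have "c \<notin> Oc" "c \<in> Mc" using memO[OF c] memG[OF c] memM[OF c] by auto
      then show ?thesis using 3 a_eq[OF c] cG[OF 3] cpq[OF c] by simp
    next
      case 4
      then have "c \<notin> Oc" "c \<in> Mc" "c \<notin> Gc" using memO[OF c] memH[OF c] memM[OF c] memG[OF c] by auto
      then show ?thesis using 4 a_eq[OF c] cH[OF 4] cpq[OF c] by simp
    qed
  qed
  have pw3: "nc c + (if c \<in> Gc then 1 else 0) \<le> d c + a c + (if c \<in> Oc then 1 else 0)" if c: "c \<in> ?Ch" for c
  proof -
    consider "nc c = 0" | "c \<in> Oc" | "c \<in> Gc" | "c \<in> Hc" using cls[OF c] by auto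
    then show ?thesis
    proof cases
      case 1 then show ?thesis using memG[OF c] memO[OF c] by simp
    next
      case 2 then show ?thesis using memG[OF c] memO[OF c] by simp
    next
      case 3
      then have "c \<notin> Oc" "c \<in> Mc" using memO[OF c] memG[OF c] memM[OF c] by auto
      then show ?thesis using 3 a_eq[OF c] d_eq[OF c] cG[OF 3] by simp
    next
      case 4
      then have "c \<notin> Oc" "c \<in> Mc" "c \<notin> Gc" using memO[OF c] memH[OF c] memM[OF c] memG[OF c] by auto
      then show ?thesis using 4 a_eq[OF c] d_eq[OF c] cH[OF 4] by simp
    qed
  qed
  have pw4a: "nc c + (if c \<in> Gc then 1 else 0) \<le> e j c + a c"
    if c: "c \<in> ?Ch" and Oj: "Oc = {j}" and H0: "Hc = {}" for c j
  proof -
    consider "nc c = 0" | "c \<in> Oc" | "c \<in> Gc" | "c \<in> Hc" using cls[OF c] by auto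
    then show ?thesis
    proof cases
      case 1
      then have "c \<notin> Gc" using memG[OF c] by simp
      then show ?thesis using 1 by simp
    next
      case 2
      then have "c = j" "c \<notin> Gc" "c \<notin> Mc" using Oj memG[OF c] memO[OF c] memM[OF c] by auto
      then show ?thesis using 2 e_eq[of j c] a_eq[OF c] cO[OF c] memO[OF c] by simp
    next
      case 3
      then have "c \<noteq> j" "c \<in> Mc" using Oj memO[OF c] memG[OF c] memM[OF c] by auto
      then show ?thesis using 3 e_eq[of j c] a_eq[OF c] d_eq[OF c] cG[OF 3] by simp
    next
      case 4 then show ?thesis using H0 by simp
    qed
  qed
  have pw4b: "nc c + (if c = h then 1 else 0) \<le> e h c + a c"
    if c: "c \<in> ?Ch" and O0: "Oc = {}" and Hh: "Hc = {h}" for c h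
  proof -
    consider "nc c = 0" | "c \<in> Oc" | "c \<in> Gc" | "c \<in> Hc" using cls[OF c] by auto
    then show ?thesis
    proof cases
      case 1
      then have "c \<notin> Hc" using memH[OF c] by simp
      then have "c \<noteq> h" using Hh by blast
      then show ?thesis using 1 by simp
    next
      case 2 then show ?thesis using O0 by simp
    next
      case 3
      then have "c \<notin> Hc" "c \<in> Mc" using GH memG[OF c] memM[OF c] by auto
      then have "c \<noteq> h" using Hh by blast
      then show ?thesis using 3 e_eq[of h c] a_eq[OF c] d_eq[OF c] cG[OF 3] \<open>c \<in> Mc\<close> by simp
    next
      case 4
      then have "c = h" "c \<in> Mc" using Hh memH[OF c] memM[OF c] by auto
      then show ?thesis using 4 e_eq[of h c] a_eq[OF c] cH[OF 4] by simp
    qed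
  qed
  have cardMc: "(\<Sum>c\<in>?Ch. if c \<in> Mc then 1 else 0) = card Mc"
  proof -
    have "{c \<in> ?Ch. c \<in> Mc} = Mc" using subs(2) by blast
    then show ?thesis using sum_ind[OF finCh, of "\<lambda>c. c \<in> Mc"] by simp
  qed
  have cardGc: "(\<Sum>c\<in>?Ch. if c \<in> Gc then 1 else 0) = card Gc"
  proof -
    have "{c \<in> ?Ch. c \<in> Gc} = Gc" using subs(3) by blast
    then show ?thesis using sum_ind[OF finCh, of "\<lambda>c. c \<in> Gc"] by simp
  qed
  have cardOc: "(\<Sum>c\<in>?Ch. if c \<in> Oc then 1 else 0) = card Oc"
  proof -
    have "{c \<in> ?Ch. c \<in> Oc} = Oc" using subs(1) by blast
    then show ?thesis using sum_ind[OF finCh, of "\<lambda>c. c \<in> Oc"] by simp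
  qed
  have S1: "(\<Sum>c\<in>?Ch. nc c) + card Mc \<le> card (FX \<inter> S) + (\<Sum>c\<in>?Ch. b c)"
  proof -
    have "(\<Sum>c\<in>?Ch. nc c + (if c \<in> Mc then 1 else 0)) \<le> (\<Sum>c\<in>?Ch. a c + b c)"
      by (rule sum_mono) (rule pw1)
    then show ?thesis using cardMc pv by (simp add: sum.distrib)
  qed
  have S2: "(\<Sum>c\<in>?Ch. nc c) + card Gc \<le> 2 * card (FX \<inter> S) + card Oc"
  proof -
    have "(\<Sum>c\<in>?Ch. nc c + (if c \<in> Gc then 1 else 0)) \<le> (\<Sum>c\<in>?Ch. 2 * a c + (if c \<in> Oc then 1 else 0))"
      by (rule sum_mono) (rule pw2)
    then show ?thesis using cardGc cardOc pv by (simp add: sum.distrib sum_distrib_left)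
  qed
  have S3: "(\<Sum>c\<in>?Ch. nc c) + card Gc \<le> (\<Sum>c\<in>?Ch. d c) + card (FX \<inter> S) + card Oc"
  proof -
    have "(\<Sum>c\<in>?Ch. nc c + (if c \<in> Gc then 1 else 0)) \<le> (\<Sum>c\<in>?Ch. d c + a c + (if c \<in> Oc then 1 else 0))"
      by (rule sum_mono) (rule pw3)
    then show ?thesis using cardGc cardOc pv by (simp add: sum.distrib)
  qed
  have S4a: "(\<Sum>c\<in>?Ch. nc c) + card Gc \<le> (\<Sum>c\<in>?Ch. e j c) + card (FX \<inter> S)"
    if "Oc = {j}" "Hc = {}" for j
  proof -
    have "(\<Sum>c\<in>?Ch. nc c + (if c \<in> Gc then 1 else 0)) \<le> (\<Sum>c\<in>?Ch. e j c + a c)"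
      by (rule sum_mono) (rule pw4a[OF _ that])
    then show ?thesis using cardGc pv by (simp add: sum.distrib)
  qed
  have S4b: "(\<Sum>c\<in>?Ch. nc c) + 1 \<le> (\<Sum>c\<in>?Ch. e h c) + card (FX \<inter> S)"
    if "Oc = {}" "Hc = {h}" for h
  proof -
    have hc: "h \<in> ?Ch" using that(2) subs(4) by blast
    have "(\<Sum>c\<in>?Ch. nc c + (if c = h then 1 else 0)) \<le> (\<Sum>c\<in>?Ch. e h c + a c)"
      by (rule sum_mono) (rule pw4b[OF _ that])
    moreover have "(\<Sum>c\<in>?Ch. (if c = h then 1 else 0::nat)) = 1" using hc finCh by simp
    ultimately show ?thesis using pv by (simp add: sum.distrib)
  qed
  have eJ: "yy j \<le> (\<Sum>c\<in>?Ch. e j c)" if "j \<in> ?Ch" for j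
  proof -
    have "e j j \<le> (\<Sum>c\<in>?Ch. e j c)" using member_le_sum[of j ?Ch "e j"] that finCh by simp
    then show ?thesis using e_eq[of j j] by simp
  qed
  define n where "n = card (T \<inter> S)"
  define N where "N = (\<Sum>c\<in>?Ch. nc c)"
  have nN: "n = s + N" using n_eq unfolding n_def N_def .
  have OHcard: "card (Oc \<union> Hc) = card Oc + card Hc" using finOGH OH by (simp add: card_Un_disjoint)
  have Gsub: "Gc \<subseteq> Mc" "Hc \<subseteq> Mc" using MGH by blast+
  have pendJ: "pend T v (FYJ j) \<and> yy j \<le> card (FYJ j \<inter> S)" if "j \<in> Oc \<union> Hc" "v \<notin> S" for j
    using FYJ_pend[OF that] FYJ_card[OF that(1)] eJ[of j] that OHsub unfolding s_def by auto
  have pend1: "pend T v FY1 \<and> 1 + (\<Sum>c\<in>?Ch. d c) = card (FY1 \<inter> S)" if "v \<in> S"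
    using FY1_pend[OF that] FY1_card that unfolding s_def by simp
  show ?thesis
  proof (cases "Mc = {}")
    case True
    have H0: "Hc = {}" "Gc = {}" using Gsub True by blast+
    have pv0: "card (FX \<inter> S) = 0"
    proof -
      have "\<And>c. c \<in> ?Ch \<Longrightarrow> a c = 0" using a_eq True by simp
      then show ?thesis using pv by simp
    qed
    have ncO: "nc c = (if c \<in> Oc then 1 else 0)" if c: "c \<in> ?Ch" for c
    proof -
      have "\<not> 2 \<le> nc c" using memM[OF c] True by blast
      then show ?thesis using memO[OF c] by auto
    qed
    have NO: "N = card Oc" unfolding N_def using ncO cardOc by (simp cong: sum.cong)
    have S5: "N \<le> (\<Sum>c\<in>?Ch. b c)"
      unfolding N_def
    proof (rule sum_mono)
      fix c assume c: "c \<in> ?Ch"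
      show "nc c \<le> b c"
      proof (cases "c \<in> Oc")
        case True then show ?thesis using b_eq[of c] cO[OF c] memO[OF c] by simp
      next
        case False then show ?thesis using ncO[OF c] by simp
      qed
    qed
    have FYex: "\<exists>FYw. pend T v FYw \<and> 1 \<le> card (FYw \<inter> S)" if "1 \<le> n"
    proof (cases "v \<in> S")
      case True then show ?thesis using pend1 by (intro exI[of _ FY1]) simp
    next
      case False
      then have "card Oc \<ge> 1" using that nN NO unfolding s_def by simp
      then obtain j where jO: "j \<in> Oc" by (metis card.empty ex_in_conv not_one_le_zero)
      have jOH: "j \<in> Oc \<union> Hc" using jO by blast
      have jc: "j \<in> ?Ch" using jO subs by blast
      have "1 \<le> yy j" using cO[OF jc] memO[OF jc] jO by simp
      then show ?thesis using pendJ[OF jOH False] by (intro exI[of _ "FYJ j"]) auto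
    qed
    consider "n = 0" | "n = 1" | "2 \<le> n" by linarith
    then show ?thesis
    proof cases
      case 1
      show ?thesis unfolding claim_def claimb_def
        using FXsub FXgood 1 unfolding n_def by (intro exI[of _ FX] exI[of _ FX] exI[of _ "{}"]) auto
    next
      case 2
      obtain FYw where FYw: "pend T v FYw" "1 \<le> card (FYw \<inter> S)" using FYex 2 by auto
      show ?thesis unfolding claim_def claimb_def
        using FXsub FXgood 2 FYw unfolding n_def by (intro exI[of _ FX] exI[of _ FX] exI[of _ FYw]) auto
    next
      case 3
      obtain FYw where FYw: "pend T v FYw" "1 \<le> card (FYw \<inter> S)" using FYex 3 by auto
      have cond: "card (Oc \<union> Hc) \<ge> 2 \<or> (card (Oc \<union> Hc) = 1 \<and> v \<in> S)"
        using 3 nN NO OHcard H0 unfolding s_def by (cases "v \<in> S") auto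
      have gF: "good Fst" using Fst_good[OF cond] .
      have st: "n \<le> card (Fst \<inter> S)" using Fst_card S5 nN by simp
      show ?thesis unfolding claim_def claimb_def
        using FXsub FXgood 3 FYw gF Fst_sub st pv0 unfolding n_def
        by (intro exI[of _ FX] exI[of _ Fst] exI[of _ FYw]) auto
    qed
  next
    case False
    then obtain c0 where c0: "c0 \<in> Mc" by blast
    have c0c: "c0 \<in> ?Ch" using c0 subs by blast
    have "nc c0 \<le> N" unfolding N_def using member_le_sum[of c0 ?Ch nc] c0c finCh by simp
    then have N2: "2 \<le> N" using memM[OF c0c] c0 by simp
    have Mc1: "1 \<le> card Mc" using finOGH(2) c0 by (metis card_0_eq empty_iff less_one not_le)
    show ?thesis
    proof (cases "card (Oc \<union> Hc) + s \<ge> 2")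
      case True
      have cond: "card (Oc \<union> Hc) \<ge> 2 \<or> (card (Oc \<union> Hc) = 1 \<and> v \<in> S)"
        using True unfolding s_def by (cases "v \<in> S") auto
      have gF: "good Fst" using Fst_good[OF cond] .
      have key: "n + 1 \<le> card (FX \<inter> S) + card (Fst \<inter> S)" using S1 Mc1 nN Fst_card unfolding N_def by simp
      define FZ where "FZ = (if card (FX \<inter> S) \<le> card (Fst \<inter> S) then Fst else FX)"
      have FZp: "FZ \<subseteq> T" "good FZ" "card (FX \<inter> S) \<le> card (FZ \<inter> S)"
        "card (Fst \<inter> S) \<le> card (FZ \<inter> S)"
        using Fst_sub gF FXsub FXgood unfolding FZ_def by auto
      show ?thesis unfolding claim_def claimb_def
        using FXsub FXgood FZp key N2 nN unfolding n_def
        by (intro exI[of _ FX] exI[of _ FZ] exI[of _ "{}"]) auto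
    next
      case False
      then have le1: "card (Oc \<union> Hc) + s \<le> 1" by simp
      have finOH: "finite (Oc \<union> Hc)" using finOGH by blast
      show ?thesis
      proof (cases "v \<in> S")
        case True
        then have s1: "s = 1" unfolding s_def by simp
        then have "card (Oc \<union> Hc) = 0" using le1 by simp
        then have OH0: "Oc = {}" "Hc = {}" using finOH by auto
        then have "Gc = Mc" using MGH by blast
        then have G1: "1 \<le> card Gc" using Mc1 by simp
        have c1: "n \<le> 2 * card (FX \<inter> S)" using S2 G1 nN s1 OH0 unfolding N_def by simp
        have c2: "n + 1 \<le> card (FY1 \<inter> S) + card (FX \<inter> S)"
          using S3 G1 nN s1 OH0 pend1[OF True] unfolding N_def by simp
        show ?thesis unfolding claim_def claimb_def
          using FXsub FXgood c1 c2 pend1[OF True] N2 nN unfolding n_def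
          by (intro exI[of _ FX] exI[of _ FX] exI[of _ FY1]) auto
      next
        case vS: False
        then have s0: "s = 0" unfolding s_def by simp
        then have le1': "card (Oc \<union> Hc) \<le> 1" using le1 by simp
        show ?thesis
        proof (cases "Oc \<union> Hc = {}")
          case True
          then have OH0: "Oc = {}" "Hc = {}" by auto
          then have "Gc = Mc" using MGH by blast
          then have G1: "1 \<le> card Gc" using Mc1 by simp
          have c1: "n + 1 \<le> 2 * card (FX \<inter> S)" using S2 G1 nN s0 OH0 unfolding N_def by simp
          show ?thesis unfolding claim_def claimb_def
            using FXsub FXgood c1 N2 nN unfolding n_def
            by (intro exI[of _ FX] exI[of _ FX] exI[of _ "{}"]) auto
        next
          case False
          then have "card (Oc \<union> Hc) \<noteq> 0" using finOH by simp
          then have "card (Oc \<union> Hc) = 1" using le1' by linarith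
          then obtain x where x: "Oc \<union> Hc = {x}" using card_1_singletonE by blast
          have xc: "x \<in> ?Ch" using x OHsub by blast
          show ?thesis
          proof (cases "x \<in> Oc")
            case True
            then have OHx: "Oc = {x}" "Hc = {}" using x OH by auto
            then have "Gc = Mc" using MGH by blast
            then have G1: "1 \<le> card Gc" using Mc1 by simp
            have c1: "n \<le> 2 * card (FX \<inter> S)" using S2 G1 nN s0 OHx unfolding N_def by simp
            have pj: "pend T v (FYJ x)" "card (FYJ x \<inter> S) = (\<Sum>c\<in>?Ch. e x c)"
              using FYJ_pend[of x] FYJ_card[of x] x vS s0 by auto
            have c2: "n + 1 \<le> card (FYJ x \<inter> S) + card (FX \<inter> S)"
              using S4a[OF OHx] G1 nN s0 pj(2) unfolding N_def by simp
            show ?thesis unfolding claim_def claimb_def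
              using FXsub FXgood c1 c2 pj(1) N2 nN unfolding n_def
              by (intro exI[of _ FX] exI[of _ FX] exI[of _ "FYJ x"]) auto
          next
            case False
            then have OHx: "Oc = {}" "Hc = {x}" using x OH by auto
            have c1: "n \<le> 2 * card (FX \<inter> S)" using S2 nN s0 OHx unfolding N_def by simp
            have pj: "pend T v (FYJ x)" "card (FYJ x \<inter> S) = (\<Sum>c\<in>?Ch. e x c)"
              using FYJ_pend[of x] FYJ_card[of x] x vS s0 by auto
            have c2: "n + 1 \<le> card (FYJ x \<inter> S) + card (FX \<inter> S)"
              using S4b[OF OHx] nN s0 pj(2) unfolding N_def by simp
            show ?thesis unfolding claim_def claimb_def
              using FXsub FXgood c1 c2 pj(1) N2 nN unfolding n_def
              by (intro exI[of _ FX] exI[of _ FX] exI[of _ "FYJ x"]) auto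
          qed
        qed
      qed
    qed
  qed
qed

lemma dp: "rsub T v \<Longrightarrow> claim T v"
proof (induction "card T" arbitrary: T v rule: less_induct)
  case less
  show ?case
  proof (rule dp_step[OF less.prems])
    fix c assume c: "c \<in> ch T v"
    show "claim (br T v c) c"
      using less.hyps[OF br_card_less[OF less.prems c] rsub_br[OF less.prems c]] .
  qed
qed

lemma main_FS:
  assumes S: "S \<subseteq> V" and lv: "leaves V E \<subseteq> S" and cc: "\<forall>C\<in>components V E. card C \<ge> 2"
  shows "\<exists>F. F \<subseteq> V \<and> 2 * card (F \<inter> S) \<ge> card S \<and>
           (\<forall>C\<in>components F (induced E F). quasi_clean S C (induced E C))"
proof -
  let ?CC = "components V E"
  have Cform: "\<exists>w\<in>V. C = {u \<in> V. reach E w u}" if "C \<in> ?CC" for C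
    using that unfolding components_def by blast
  have Crs: "\<exists>w. rsub C w \<and> (\<forall>x\<in>C. \<forall>y. {x, y} \<in> E \<longrightarrow> y \<in> C)" if "C \<in> ?CC" for C
    using Cform[OF that] comp_rsub by blast
  have Cgood: "\<exists>FZ. FZ \<subseteq> C \<and> good FZ \<and> card (C \<inter> S) \<le> 2 * card (FZ \<inter> S)" if C: "C \<in> ?CC" for C
  proof -
    obtain w where w: "rsub C w" "\<forall>x\<in>C. \<forall>y. {x, y} \<in> E \<longrightarrow> y \<in> C" using Crs[OF C] by blast
    have two: "card (C \<inter> S) \<ge> 2" using two_leaves[OF w cc[rule_format, OF C] lv] .
    obtain FX FZ FY where cb: "claimb C w FX FZ FY" using dp[OF w(1)] unfolding claim_def by blast
    then show ?thesis using two unfolding claimb_def by blast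
  qed
  then obtain fz where fz: "\<And>C. C \<in> ?CC \<Longrightarrow> fz C \<subseteq> C \<and> good (fz C) \<and> card (C \<inter> S) \<le> 2 * card (fz C \<inter> S)"
    by metis
  have finCC: "finite ?CC"
  proof -
    have "?CC \<subseteq> Pow V" unfolding components_def by blast
    then show ?thesis using finV by (meson finite_Pow_iff finite_subset)
  qed
  have reach_eq: "C = C'" if H: "C \<in> ?CC" "C' \<in> ?CC" "x \<in> C" "x \<in> C'" for C C' x
  proof -
    obtain w where w: "w \<in> V" "C = {u \<in> V. reach E w u}" using Cform[OF H(1)] by blast
    obtain w' where w': "w' \<in> V" "C' = {u \<in> V. reach E w' u}" using Cform[OF H(2)] by blast
    have "reach E w x" "reach E w' x" using H(3,4) w w' by blast+
    then have r1: "reach E w w'" and r2: "reach E w' w" using reach_sym reach_trans by metis+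
    have "reach E w u \<longleftrightarrow> reach E w' u" for u
      using r1 r2 reach_trans by metis
    then show ?thesis using w w' by blast
  qed
  have sepC: "sep C C'" if H: "C \<in> ?CC" "C' \<in> ?CC" "C \<noteq> C'" for C C'
    unfolding sep_def
  proof (intro conjI ballI)
    show "C \<inter> C' = {}" using reach_eq H by blast
  next
    fix x y assume x: "x \<in> C" and y: "y \<in> C'"
    show "{x, y} \<notin> E"
    proof
      assume e: "{x, y} \<in> E"
      obtain w where "rsub C w" "\<forall>x\<in>C. \<forall>y. {x, y} \<in> E \<longrightarrow> y \<in> C" using Crs[OF H(1)] by blast
      then have "y \<in> C" using x e by blast
      then show False using reach_eq[OF H(1,2) _ y] H(3) by blast
    qed
  qed
  define F where "F = (\<Union>C\<in>?CC. fz C)"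
  have gF: "good F"
    unfolding F_def
  proof (rule good_UN[OF finCC])
    show "\<And>C. C \<in> ?CC \<Longrightarrow> good (fz C)" using fz by blast
    fix C C' assume "C \<in> ?CC" "C' \<in> ?CC" "C \<noteq> C'"
    then show "sep (fz C) (fz C')" using sep_mono[OF sepC] fz by metis
  qed
  have FV: "F \<subseteq> V" unfolding F_def using fz unfolding components_def by blast
  have cardF: "card (F \<inter> S) = (\<Sum>C\<in>?CC. card (fz C \<inter> S))"
  proof -
    have "F \<inter> S = (\<Union>C\<in>?CC. fz C \<inter> S)" unfolding F_def by blast
    moreover have "card (\<Union>C\<in>?CC. fz C \<inter> S) = (\<Sum>C\<in>?CC. card (fz C \<inter> S))"
    proof (rule card_UN_disjoint[OF finCC])
      show "\<forall>C\<in>?CC. finite (fz C \<inter> S)"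
      proof
        fix C assume C: "C \<in> ?CC"
        have "fz C \<subseteq> V" using fz[OF C] C unfolding components_def by blast
        then show "finite (fz C \<inter> S)" using finV finite_subset by blast
      qed
      show "\<forall>C\<in>?CC. \<forall>C'\<in>?CC. C \<noteq> C' \<longrightarrow> fz C \<inter> S \<inter> (fz C' \<inter> S) = {}"
        using sepC fz unfolding sep_def by blast
    qed
    ultimately show ?thesis by simp
  qed
  have cardS: "card S = (\<Sum>C\<in>?CC. card (C \<inter> S))"
  proof -
    have "S = (\<Union>C\<in>?CC. C \<inter> S)"
    proof
      show "S \<subseteq> (\<Union>C\<in>?CC. C \<inter> S)"
      proof
        fix x assume x: "x \<in> S"
        then have xV: "x \<in> V" using S by blast
        then have "{u \<in> V. reach E x u} \<in> ?CC" unfolding components_def by blast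
        moreover have "x \<in> {u \<in> V. reach E x u}" using xV by simp
        ultimately show "x \<in> (\<Union>C\<in>?CC. C \<inter> S)" using x by blast
      qed
    qed blast
    moreover have "card (\<Union>C\<in>?CC. C \<inter> S) = (\<Sum>C\<in>?CC. card (C \<inter> S))"
    proof (rule card_UN_disjoint[OF finCC])
      show "\<forall>C\<in>?CC. finite (C \<inter> S)" using finV unfolding components_def by auto
      show "\<forall>C\<in>?CC. \<forall>C'\<in>?CC. C \<noteq> C' \<longrightarrow> C \<inter> S \<inter> (C' \<inter> S) = {}"
        using sepC unfolding sep_def by blast
    qed
    ultimately show ?thesis by simp
  qed
  have "card S \<le> 2 * card (F \<inter> S)"
  proof -
    have "(\<Sum>C\<in>?CC. card (C \<inter> S)) \<le> (\<Sum>C\<in>?CC. 2 * card (fz C \<inter> S))"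
      using fz by (intro sum_mono) blast
    then show ?thesis using cardS cardF by (simp add: sum_distrib_left)
  qed
  moreover have "\<forall>C\<in>components F (induced E F). quasi_clean S C (induced E C)"
    using good_components[OF gF] by blast
  ultimately show ?thesis using FV by blast
qed
end


theorem mainTheorem16:
  fixes V :: "'a set" and E :: "'a set set" and S :: "'a set"
  assumes "forest V E"
    and "S \<subseteq> V"
    and "leaves V E \<subseteq> S"
    and "\<forall>C\<in>components V E. card C \<ge> 2"
  shows "\<exists>F. F \<subseteq> V \<and> 2 * card (F \<inter> S) \<ge> card S \<and>
           (\<forall>C\<in>components F (induced E F). quasi_clean S C (induced E C))"
proof -
  interpret FS V E S by (rule FS.intro) (rule assms(1))
  show ?thesis using main_FS assms(2-4) by blast
qed

end
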